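(* Consider the $2$-MultiQueue with $n$ queues in the long run, i.e. with the gaps between the ranks of its top-elements distributed according to their limiting (stationary) distribution. For every constant $a>0$ there is a constant $C>0$ such that, for all sufficiently large $n$, with probability at least $1-n^{-a}$ every one of $n^{a}$ consecutive deletions has rank error at most $C\,n\log n$.
   Context: The $2$-MultiQueue with $n$ queues: an infinite totally ordered set of elements $x_1<x_2<\cdots$ is assigned element-wise independently and uniformly at random to $n$ priority queues; each deletion picks two queues independently and uniformly at random and deletes the minimum of the one whose minimum is smaller. Ordering the queues by their minima (top-elements), this deletes from the $i$-th queue with $\Pr[\text{index}\le i]=1-(1-\tfrac in)^2$. The rank error of a deletion is $r-1$ where $r$ is the rank of the deleted element among all elements present just before the deletion. In the long run, the ranks of the top-elements are $r_i=1+\sum_{j<i}\delta_j$ with $\delta_1,\dots,\delta_{n-1}$ independent and $\delta_j$ geometrically distributed on $\{1,2,\dots\}$ with success probability $1-\frac{j}{n(1-(1-j/n)^2)}$. *)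

theory Defs
  imports "HOL-Probability.Probability"
begin

text \<open>Queues are identified by numbers 0,...,n-1.  The elements present at a given
time are identified by their position (0,1,2,...) in the increasing order of the
elements present initially; a configuration is given by the queue label of every
position.\<close>

text \<open>Success probability of the geometric gap delta_j (for 1 <= j <= n-1).\<close>
definition gap_succ :: "nat \<Rightarrow> nat \<Rightarrow> real" where
  "gap_succ n j = 1 - real j / (real n * (1 - (1 - real j / real n)^2))"

text \<open>Long-run (stationary) law of the configuration, position by position:
S is the set of queues whose top-element has already appeared.  While j = card S < n
queues are opened, the next element is the top of a new queue with probability
gap_succ n j (so the gap delta_j is geometric with that success probability; the new
queue is uniform among the unopened ones), and otherwise it is a non-top element
lying uniformly in one of the j opened queues.  Once all n queues are opened, each
element lies uniformly in one of the n queues.\<close>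
definition step_prob :: "nat \<Rightarrow> nat set \<Rightarrow> nat \<Rightarrow> real" where
  "step_prob n S q =
     (if n \<le> q then 0
      else if q \<in> S then
        (if card S < n then (1 - gap_succ n (card S)) / real (card S) else 1 / real n)
      else if S = {} then 1 / real n
      else gap_succ n (card S) / real (n - card S))"

fun init_prob_aux :: "nat \<Rightarrow> nat set \<Rightarrow> nat list \<Rightarrow> real" where
  "init_prob_aux n S [] = 1"
| "init_prob_aux n S (q # qs) = step_prob n S q * init_prob_aux n (insert q S) qs"

text \<open>Probability that the first length ls positions carry the labels ls.\<close>
definition init_prob :: "nat \<Rightarrow> nat list \<Rightarrow> real" where
  "init_prob n ls = init_prob_aux n {} ls"

definition top_pos :: "(nat \<Rightarrow> nat) \<Rightarrow> nat set \<Rightarrow> nat \<Rightarrow> nat" where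
  "top_pos Lw P q = (LEAST k. k \<in> P \<and> Lw k = q)"

definition del_pos :: "(nat \<Rightarrow> nat) \<Rightarrow> nat set \<Rightarrow> nat \<times> nat \<Rightarrow> nat" where
  "del_pos Lw P ab = min (top_pos Lw P (fst ab)) (top_pos Lw P (snd ab))"

text \<open>Present elements before deletion number t (deletions numbered 0,1,2,...).\<close>
fun present :: "(nat \<Rightarrow> nat) \<Rightarrow> (nat \<Rightarrow> nat \<times> nat) \<Rightarrow> nat \<Rightarrow> nat set" where
  "present Lw cw 0 = UNIV"
| "present Lw cw (Suc t) = present Lw cw t - {del_pos Lw (present Lw cw t) (cw t)}"

definition deleted :: "(nat \<Rightarrow> nat) \<Rightarrow> (nat \<Rightarrow> nat \<times> nat) \<Rightarrow> nat \<Rightarrow> nat" where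
  "deleted Lw cw t = del_pos Lw (present Lw cw t) (cw t)"

definition rank_error :: "(nat \<Rightarrow> nat) \<Rightarrow> (nat \<Rightarrow> nat \<times> nat) \<Rightarrow> nat \<Rightarrow> nat" where
  "rank_error Lw cw t = card {k \<in> present Lw cw t. k < deleted Lw cw t}"

text \<open>M is a probability space carrying the long-run initial configuration L and the
independent uniform choices c t of two queues for deletion t, specified through the
joint law of all finite-dimensional cylinders.\<close>
definition mq_long_run ::
  "'a measure \<Rightarrow> nat \<Rightarrow> ('a \<Rightarrow> nat \<Rightarrow> nat) \<Rightarrow> ('a \<Rightarrow> nat \<Rightarrow> nat \<times> nat) \<Rightarrow> bool" where
  "mq_long_run M n L c \<longleftrightarrow>
     prob_space M \<and>
     (\<forall>k. (\<lambda>\<omega>. L \<omega> k) \<in> measurable M (count_space UNIV)) \<and>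
     (\<forall>t. (\<lambda>\<omega>. c \<omega> t) \<in> measurable M (count_space UNIV)) \<and>
     (\<forall>ls T ps. (\<forall>t<T. ps t \<in> {0..<n} \<times> {0..<n}) \<longrightarrow>
        measure M {\<omega> \<in> space M. (\<forall>i<length ls. L \<omega> i = ls ! i) \<and> (\<forall>t<T. c \<omega> t = ps t)}
          = init_prob n ls * (1 / (real n)^2) ^ T)"

end

theory Submission
  imports Defs
begin

lemma card_le_n: "S \<subseteq> {..<n} \<Longrightarrow> card S \<le> n"
  by (metis card_lessThan card_mono finite_lessThan)

lemma gap_succ_eq:
  assumes "0 < j" "j < n"
  shows "gap_succ n j = real (n - j) / (2 * real n - real j)"
proof -
  have n: "real n > 0" "real j > 0" "real j < real n" using assms by auto
  have "real n * (1 - (1 - real j / real n)^2) = real j * (2 * real n - real j) / real n"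
    using n by (simp add: field_simps power2_eq_square)
  then show ?thesis using n assms unfolding gap_succ_def
    by (simp add: field_simps of_nat_diff)
qed

lemma step_formula:
  assumes S: "S \<subseteq> {..<n}" and q: "q < n"
  shows "step_prob n S q = (if q \<in> S then real n / (real (card S) * (2*real n - real (card S)))
     else if S = {} then 1/real n else 1/(2*real n - real (card S)))"
proof -
  have fin: "finite S" using S finite_subset by blast
  have cle: "card S \<le> n" using card_le_n[OF S] .
  show ?thesis
  proof (cases "q \<in> S")
    case True
    then have c0: "card S > 0" using fin card_gt_0_iff by blast
    show ?thesis
    proof (cases "card S < n")
      case True
      have g: "1 - gap_succ n (card S) = real n / (2 * real n - real (card S))"
        using gap_succ_eq[OF c0 True] True by (simp add: field_simps of_nat_diff)
      show ?thesis using \<open>q \<in> S\<close> c0 q True unfolding step_prob_def g by simp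
    next
      case False
      then have "card S = n" using cle by auto
      then show ?thesis using \<open>q \<in> S\<close> q c0 unfolding step_prob_def by (simp add: field_simps)
    qed
  next
    case False
    then have "S \<subset> {..<n}" using S q by auto
    then have "card S < n" using psubset_card_mono[of "{..<n}" S] by simp
    show ?thesis
    proof (cases "S = {}")
      case True then show ?thesis using False q unfolding step_prob_def by simp
    next
      case ne: False
      then have c0: "card S > 0" using fin card_gt_0_iff by blast
      show ?thesis using False ne q gap_succ_eq[OF c0 \<open>card S < n\<close>] \<open>card S < n\<close>
        unfolding step_prob_def by (simp add: field_simps of_nat_diff)
    qed
  qed
qed

lemma step_nonneg:
  assumes S: "S \<subseteq> {..<n}"
  shows "step_prob n S q \<ge> 0"
proof (cases "q < n")
  case True
  have "real (card S) \<le> real n" using card_le_n[OF S] by simp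
  then show ?thesis using step_formula[OF S True] by auto
next
  case False then show ?thesis unfolding step_prob_def by simp
qed

lemma step_lower:
  assumes S: "S \<subseteq> {..<n}" and q: "q < n"
  shows "step_prob n S q \<ge> 1 / (2 * real n)"
proof -
  have j: "real (card S) \<le> real n" using card_le_n[OF S] by simp
  have n: "real n > 0" using q by simp
  show ?thesis
  proof (cases "q \<in> S")
    case True
    then have c0: "real (card S) > 0" using S finite_subset card_gt_0_iff by fastforce
    have "real (card S) * (2 * real n - real (card S)) \<le> real n * (2 * real n)"
      using j c0 by (intro mult_mono) auto
    then have "1 / (2 * real n) \<le> real n / (real (card S) * (2 * real n - real (card S)))"
      using n c0 j by (simp add: field_simps)
    then show ?thesis using step_formula[OF S q] True by simp
  next
    case False
    have "2 * real n - real (card S) > 0" using j n by linarith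
    then show ?thesis using step_formula[OF S q] False n j
      by (auto simp: field_simps)
  qed
qed

lemma step_sum:
  assumes S: "S \<subseteq> {..<n}" and n: "n > 0"
  shows "(\<Sum>q<n. step_prob n S q) = 1"
proof -
  have fin: "finite S" using S finite_subset by blast
  have split: "{..<n} = S \<union> ({..<n} - S)" using S by auto
  have "(\<Sum>q<n. step_prob n S q) = (\<Sum>q\<in>S. step_prob n S q) + (\<Sum>q\<in>{..<n} - S. step_prob n S q)"
    by (subst split, rule sum.union_disjoint) (use fin in auto)
  also have "(\<Sum>q\<in>S. step_prob n S q) = (\<Sum>q\<in>S. real n / (real (card S) * (2*real n - real (card S))))"
    using S step_formula[OF S] by (intro sum.cong) auto
  also have "(\<Sum>q\<in>{..<n} - S. step_prob n S q) = (\<Sum>q\<in>{..<n} - S. (if S = {} then 1/real n else 1/(2*real n - real (card S))))"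
    using S step_formula[OF S] by (intro sum.cong) auto
  finally have e0: "(\<Sum>q<n. step_prob n S q) = (\<Sum>q\<in>S. real n / (real (card S) * (2*real n - real (card S))))
     + (\<Sum>q\<in>{..<n} - S. (if S = {} then 1/real n else 1/(2*real n - real (card S))))" .
  have cd: "card ({..<n} - S) = n - card S" using S fin by (simp add: card_Diff_subset)
  have e: "(\<Sum>q<n. step_prob n S q) = real (card S) * (real n / (real (card S) * (2*real n - real (card S))))
     + real (n - card S) * (if S = {} then 1/real n else 1/(2*real n - real (card S)))" using e0 cd by simp
  have j: "card S \<le> n" using card_le_n[OF S] .
  show ?thesis
  proof (cases "S = {}")
    case True then show ?thesis using e n by simp
  next
    case False
    then have c0: "card S > 0" using fin card_gt_0_iff by blast
    define d where "d = 2*real n - real (card S)"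
    have d: "d > 0" using j n unfolding d_def by linarith
    have "real (card S) * (real n / (real (card S) * d)) = real n / d" using c0 d by simp
    moreover have "real (n - card S) * (1 / d) = (real n - real (card S)) / d" using j by (simp add: of_nat_diff)
    ultimately have "(\<Sum>q<n. step_prob n S q) = real n / d + (real n - real (card S)) / d"
      using e False unfolding d_def[symmetric] by simp
    also have "\<dots> = (2 * real n - real (card S)) / d" by (simp add: add_divide_distrib[symmetric])
    finally show ?thesis using d unfolding d_def by simp
  qed
qed

definition lists_of :: "'b set \<Rightarrow> nat \<Rightarrow> 'b list set" where
  "lists_of A m = {ls. length ls = m \<and> set ls \<subseteq> A}"

lemma lists_of_0[simp]: "lists_of A 0 = {[]}"
  unfolding lists_of_def by auto

lemma lists_of_Suc: "lists_of A (Suc m) = (\<lambda>(z,r). z#r) ` (A \<times> lists_of A m)"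
  unfolding lists_of_def
proof (safe, goal_cases)
  case (1 x)
  then obtain z r where "x = z # r" by (cases x) auto
  then show ?case using 1 by (auto intro!: image_eqI[of _ _ "(z,r)"])
qed auto

lemma finite_lists_of[simp]: "finite A \<Longrightarrow> finite (lists_of A m)"
  unfolding lists_of_def using finite_lists_length_eq[of A m] by (simp add: conj_commute)

lemma sum_lists_of_Suc:
  assumes "finite A"
  shows "(\<Sum>ls\<in>lists_of A (Suc m). f ls) = (\<Sum>z\<in>A. \<Sum>r\<in>lists_of A m. f (z#r))"
proof -
  have inj: "inj_on (\<lambda>(z,r). z#r) (A \<times> lists_of A m)" by (auto simp: inj_on_def)
  have "(\<Sum>ls\<in>lists_of A (Suc m). f ls) = (\<Sum>x\<in>A \<times> lists_of A m. f ((\<lambda>(z,r). z#r) x))"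
    unfolding lists_of_Suc by (rule sum.reindex[OF inj, unfolded comp_def])
  also have "\<dots> = (\<Sum>z\<in>A. \<Sum>r\<in>lists_of A m. f (z#r))"
    by (simp add: sum.cartesian_product case_prod_beta)
  finally show ?thesis .
qed

lemma lists_of_Cons_iff[simp]: "(z # r \<in> lists_of A (Suc m)) = (z \<in> A \<and> r \<in> lists_of A m)"
  unfolding lists_of_def by auto

fun fdel :: "nat \<times> nat \<Rightarrow> nat list \<Rightarrow> nat list" where
  "fdel p [] = []"
| "fdel p (z # r) = (if r = [] then [] else if z = fst p \<or> z = snd p then r else z # fdel p r)"

definition Qf :: "nat \<Rightarrow> nat set \<Rightarrow> nat list \<Rightarrow> real" where
  "Qf n S w = (\<Sum>x\<in>{..<n} - S. step_prob n S x * init_prob_aux n (insert x S) w)"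

definition Gf :: "nat \<Rightarrow> nat set \<Rightarrow> nat list \<Rightarrow> real" where
  "Gf n S ls = (\<Sum>p\<in>({..<n} - S) \<times> ({..<n} - S). \<Sum>ls'\<in>lists_of {..<n} (Suc (length ls)).
      if fdel p ls' = ls then init_prob_aux n S ls' else 0)"

lemma Gf_Nil:
  assumes S: "S \<subseteq> {..<n}" and n: "n > 0"
  shows "Gf n S [] = real (card ({..<n} - S))^2"
proof -
  have "\<And>p. (\<Sum>ls'\<in>lists_of {..<n} (Suc 0). if fdel p ls' = [] then init_prob_aux n S ls' else 0) = 1"
    by (simp add: sum_lists_of_Suc step_sum[OF S n])
  then show ?thesis unfolding Gf_def by (simp add: power2_eq_square)
qed

lemma sum_pair_hit:
  fixes F :: "nat \<Rightarrow> real"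
  assumes T: "finite T"
  shows "(\<Sum>p\<in>T \<times> T. (if fst p = snd p then F (fst p) else F (fst p) + F (snd p)))
     = (2 * real (card T) - 1) * (\<Sum>z\<in>T. F z)"
proof -
  have "(\<Sum>p\<in>T \<times> T. (if fst p = snd p then F (fst p) else F (fst p) + F (snd p)))
     = (\<Sum>a\<in>T. \<Sum>b\<in>T. F a + F b - (if a = b then F a else 0))"
    unfolding sum.cartesian_product by (auto intro!: sum.cong)
  also have "\<dots> = (\<Sum>a\<in>T. real (card T) * F a + (\<Sum>z\<in>T. F z) - F a)"
    using T by (auto simp: sum_subtractf sum.distrib intro!: sum.cong)
  also have "\<dots> = (2 * real (card T) - 1) * (\<Sum>z\<in>T. F z)"
    by (simp add: sum_subtractf sum.distrib sum_distrib_left sum_distrib_right algebra_simps)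
  finally show ?thesis .
qed

lemma sum_two:
  fixes F :: "nat \<Rightarrow> real"
  assumes "a \<in> A" "b \<in> A" "finite A"
  shows "(\<Sum>z\<in>A. if z = a \<or> z = b then F z else 0) = (if a = b then F a else F a + F b)"
proof -
  have "(\<Sum>z\<in>A. if z = a \<or> z = b then F z else 0) = sum F {z\<in>A. z = a \<or> z = b}"
    using assms by (simp add: sum.inter_filter)
  also have "{z\<in>A. z = a \<or> z = b} = {a, b}" using assms by auto
  finally show ?thesis by auto
qed

lemma sum_delta_conj:
  fixes V :: real
  assumes "finite A"
  shows "(\<Sum>z\<in>A. if z = y \<and> Q then V else 0) = (if y \<in> A \<and> Q then V else 0)"
  using assms by (cases Q) (simp_all add: sum.delta)

lemma Gf_Cons:
  assumes S: "S \<subseteq> {..<n}" and y: "y < n" and w: "set w \<subseteq> {..<n}"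
  shows "Gf n S (y#w) = (2 * real (card ({..<n}-S)) - 1) * Qf n S (y#w)
           + step_prob n S y * Gf n (insert y S) w"
proof -
  let ?A = "{..<n}"
  let ?T = "{..<n} - S"
  let ?L = "lists_of ?A (Suc (length w))"
  define H where "H p = (\<Sum>r\<in>?L. if fdel p r = w then init_prob_aux n (insert y S) r else 0)" for p
  define F where "F z = init_prob_aux n S (z#y#w)" for z
  have r_ne: "\<And>r. r \<in> ?L \<Longrightarrow> r \<noteq> []" by (auto simp: lists_of_def)
  have inner: "(\<Sum>r\<in>?L. if fdel p (z#r) = y#w then init_prob_aux n S (z#r) else 0)
     = (if z = fst p \<or> z = snd p then F z else 0)
       + (if z = y \<and> \<not>(y = fst p \<or> y = snd p) then step_prob n S y * H p else 0)" for p z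
  proof (cases "z = fst p \<or> z = snd p")
    case True
    then have "(\<Sum>r\<in>?L. if fdel p (z#r) = y#w then init_prob_aux n S (z#r) else 0)
        = (\<Sum>r\<in>?L. if r = y#w then F z else 0)" using r_ne unfolding F_def by (intro sum.cong) auto
    also have "\<dots> = F z"
    proof -
      have "y#w \<in> ?L" using y w by (auto simp: lists_of_def)
      then show ?thesis by (simp add: sum.delta)
    qed
    finally show ?thesis using True by auto
  next
    case False
    then have "(\<Sum>r\<in>?L. if fdel p (z#r) = y#w then init_prob_aux n S (z#r) else 0)
        = (\<Sum>r\<in>?L. if z = y then (if fdel p r = w then step_prob n S y * init_prob_aux n (insert y S) r else 0) else 0)"
      using r_ne by (intro sum.cong) auto
    then show ?thesis using False by (auto simp: H_def sum_distrib_left intro!: sum.cong)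
  qed
  have "Gf n S (y#w) = (\<Sum>p\<in>?T \<times> ?T. \<Sum>z\<in>?A. (if z = fst p \<or> z = snd p then F z else 0)
       + (if z = y \<and> \<not>(y = fst p \<or> y = snd p) then step_prob n S y * H p else 0))"
    unfolding Gf_def length_Cons
    by (intro sum.cong refl, subst sum_lists_of_Suc) (simp_all only: inner finite_lessThan)
  also have "\<dots> = (\<Sum>p\<in>?T \<times> ?T. (if fst p = snd p then F (fst p) else F (fst p) + F (snd p)))
      + (\<Sum>p\<in>?T \<times> ?T. if \<not>(y = fst p \<or> y = snd p) then step_prob n S y * H p else 0)"
    using y by (simp add: sum.distrib sum_two mem_Times_iff sum_delta_conj)
  also have "(\<Sum>p\<in>?T \<times> ?T. (if fst p = snd p then F (fst p) else F (fst p) + F (snd p)))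
      = (2 * real (card ?T) - 1) * Qf n S (y#w)"
    by (simp add: sum_pair_hit F_def Qf_def)
  also have "(\<Sum>p\<in>?T \<times> ?T. if \<not>(y = fst p \<or> y = snd p) then step_prob n S y * H p else 0)
      = (\<Sum>p\<in>{p\<in>?T \<times> ?T. \<not>(y = fst p \<or> y = snd p)}. step_prob n S y * H p)"
    by (simp add: sum.inter_filter)
  also have "{p\<in>?T \<times> ?T. \<not>(y = fst p \<or> y = snd p)} = (?A - insert y S) \<times> (?A - insert y S)"
    by auto
  also have "(\<Sum>p\<in>(?A - insert y S) \<times> (?A - insert y S). step_prob n S y * H p) = step_prob n S y * Gf n (insert y S) w"
    unfolding Gf_def H_def by (simp add: sum_distrib_left)
  finally show ?thesis .
qed

lemma card_T: "S \<subseteq> {..<n} \<Longrightarrow> real (card ({..<n} - S)) = real n - real (card S)"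
  using card_le_n[of S n] finite_subset[of S "{..<n}"] by (simp add: card_Diff_subset of_nat_diff)

lemma Qf_Nil:
  assumes S: "S \<subseteq> {..<n}" "S \<noteq> {}"
  shows "Qf n S [] = (real n - real (card S)) / (2 * real n - real (card S))"
proof -
  have "Qf n S [] = (\<Sum>x\<in>{..<n} - S. 1 / (2 * real n - real (card S)))"
    unfolding Qf_def using step_formula[OF S(1)] S by (intro sum.cong) auto
  then show ?thesis using card_T[OF S(1)] by simp
qed

lemma Qf_Cons_in:
  assumes S: "S \<subseteq> {..<n}" and y: "y \<in> S"
  shows "Qf n S (y#w) = real n / ((1 + real (card S)) * (2 * real n - (1 + real (card S)))) * Qf n S w"
proof -
  have fin: "finite S" using S finite_subset by blast
  have "Qf n S (y#w) = (\<Sum>x\<in>{..<n} - S. real n / ((1 + real (card S)) * (2 * real n - (1 + real (card S))))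
       * (step_prob n S x * init_prob_aux n (insert x S) w))"
    unfolding Qf_def
  proof (intro sum.cong refl)
    fix x assume x: "x \<in> {..<n} - S"
    have S': "insert x S \<subseteq> {..<n}" using S x by auto
    have "step_prob n (insert x S) y = real n / ((1 + real (card S)) * (2 * real n - (1 + real (card S))))"
      using step_formula[OF S', of y] x y S fin by auto
    moreover have "insert y (insert x S) = insert x S" using y by auto
    ultimately show "step_prob n S x * init_prob_aux n (insert x S) (y # w) =
         real n / ((1 + real (card S)) * (2 * real n - (1 + real (card S)))) *
         (step_prob n S x * init_prob_aux n (insert x S) w)" by simp
  qed
  then show ?thesis unfolding Qf_def by (simp add: sum_distrib_left)
qed

lemma Qf_Cons_out:
  assumes S: "S \<subseteq> {..<n}" and y: "y < n" "y \<notin> S"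
  shows "Qf n S (y#w) = step_prob n S y * (real n / ((1 + real (card S)) * (2 * real n - (1 + real (card S))))
          * init_prob_aux n (insert y S) w + Qf n (insert y S) w)"
proof -
  have fin: "finite S" using S finite_subset by blast
  have Sy: "insert y S \<subseteq> {..<n}" using S y by auto
  have T: "{..<n} - S = insert y ({..<n} - insert y S)" using y by auto
  have "Qf n S (y#w) = step_prob n S y * init_prob_aux n (insert y S) (y#w)
      + (\<Sum>x\<in>{..<n} - insert y S. step_prob n S x * init_prob_aux n (insert x S) (y#w))"
    unfolding Qf_def by (subst T, subst sum.insert) auto
  also have "step_prob n S y * init_prob_aux n (insert y S) (y#w) = step_prob n S y *
      (real n / ((1 + real (card S)) * (2 * real n - (1 + real (card S)))) * init_prob_aux n (insert y S) w)"
    using step_formula[OF Sy, of y] y fin by simp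
  also have "(\<Sum>x\<in>{..<n} - insert y S. step_prob n S x * init_prob_aux n (insert x S) (y#w))
      = (\<Sum>x\<in>{..<n} - insert y S. step_prob n S y * (step_prob n (insert y S) x * init_prob_aux n (insert x (insert y S)) w))"
  proof (intro sum.cong refl)
    fix x assume x: "x \<in> {..<n} - insert y S"
    have Sx: "insert x S \<subseteq> {..<n}" using S x by auto
    have "step_prob n S x * step_prob n (insert x S) y = step_prob n S y * step_prob n (insert y S) x"
      using step_formula[OF Sx, of y] step_formula[OF Sy, of x] step_formula[OF S, of x] step_formula[OF S, of y]
        x y fin by auto
    moreover have "insert y (insert x S) = insert x (insert y S)" by auto
    ultimately show "step_prob n S x * init_prob_aux n (insert x S) (y # w) =
         step_prob n S y * (step_prob n (insert y S) x * init_prob_aux n (insert x (insert y S)) w)"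
      by (simp add: mult.assoc[symmetric])
  qed
  finally show ?thesis unfolding Qf_def by (simp add: sum_distrib_left distrib_left)
qed

lemma Gf_closed:
  assumes "S \<subseteq> {..<n}" "set ls \<subseteq> {..<n}" "n > 0"
  shows "Gf n S ls = real n * (real n - real (card S)) * init_prob_aux n S ls
     - real (card S) * (2 * real n - real (card S)) * Qf n S ls"
  using assms
proof (induction ls arbitrary: S)
  case Nil
  show ?case
  proof (cases "S = {}")
    case True then show ?thesis using Gf_Nil[OF Nil(1,3)] by (simp add: power2_eq_square)
  next
    case False
    have j: "real (card S) \<le> real n" using card_le_n[OF Nil(1)] by simp
    have d: "2 * real n - real (card S) > 0" using j Nil(3) by linarith
    have q: "real (card S) * (2 * real n - real (card S)) * Qf n S [] = real (card S) * (real n - real (card S))"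
      using Qf_Nil[OF Nil(1) False] d by simp
    have "Gf n S [] = (real n - real (card S))^2" using Gf_Nil[OF Nil(1,3)] card_T[OF Nil(1)] by simp
    then show ?thesis using q by (simp add: power2_eq_square algebra_simps)
  qed
next
  case (Cons y w)
  have S: "S \<subseteq> {..<n}" and y: "y < n" and w: "set w \<subseteq> {..<n}" using Cons.prems by auto
  have fin: "finite S" using S finite_subset by blast
  have j: "real (card S) \<le> real n" using card_le_n[OF S] by simp
  define N where "N = real n"
  define J where "J = real (card S)"
  define c where "c = real n / ((1 + real (card S)) * (2 * real n - (1 + real (card S))))"
  have kk: "real (card ({..<n} - S)) = N - J" using card_T[OF S] unfolding N_def J_def .
  show ?case
  proof (cases "y \<in> S")
    case True
    have J0: "J \<ge> 1" using True fin card_gt_0_iff[of S] unfolding J_def by fastforce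
    have J1: "J \<le> N" using j unfolding J_def N_def .
    define sy where "sy = step_prob n S y"
    have sy: "sy * (J * (2 * N - J)) = N"
      unfolding sy_def using step_formula[OF S y] True J0 J1 unfolding J_def[symmetric] N_def[symmetric]
      by (simp add: field_simps)
    have IH: "Gf n S w = N * (N - J) * init_prob_aux n S w - J * (2 * N - J) * Qf n S w"
      using Cons.IH[OF S w Cons.prems(3)] unfolding N_def J_def .
    have G: "Gf n S (y#w) = (2 * (N - J) - 1) * (c * Qf n S w) + sy * Gf n S w"
      using Gf_Cons[OF S y w] Qf_Cons_in[OF S True, of w] True kk
      unfolding sy_def c_def by (simp add: insert_absorb)
    have P: "init_prob_aux n S (y#w) = sy * init_prob_aux n S w"
      using True by (simp add: insert_absorb sy_def)
    have Q: "Qf n S (y#w) = c * Qf n S w" using Qf_Cons_in[OF S True, of w] unfolding c_def .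
    have key: "Qf n S w * (c * (2 * (N - J) - 1) + c * (J * (2 * N - J)) - sy * (J * (2 * N - J))) = 0"
    proof (cases "card S = n")
      case True
      then have "S = {..<n}" using card_seteq[OF finite_lessThan S] by simp
      then have "Qf n S w = 0" unfolding Qf_def by simp
      then show ?thesis by simp
    next
      case False
      then have J2: "J + 1 \<le> N" using card_le_n[OF S] unfolding J_def N_def by linarith
      have D: "(1 + J) * (2 * N - (1 + J)) > 0" using J0 J2 by (intro mult_pos_pos) auto
      have c: "c * ((1 + J) * (2 * N - (1 + J))) = N"
      proof -
        have "c = N / ((1 + J) * (2 * N - (1 + J)))" unfolding c_def J_def N_def by simp
        then show ?thesis using D by (metis less_irrefl eq_divide_eq)
      qed
      have "c * (2 * (N - J) - 1) + c * (J * (2 * N - J)) = c * ((1 + J) * (2 * N - (1 + J)))"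
        by (simp add: algebra_simps)
      then show ?thesis using c sy by simp
    qed
    have diff: "Gf n S (y#w) - (N * (N - J) * init_prob_aux n S (y#w) - J * (2 * N - J) * Qf n S (y#w))
        = Qf n S w * (c * (2 * (N - J) - 1) + c * (J * (2 * N - J)) - sy * (J * (2 * N - J)))"
      unfolding G IH P Q by (simp add: algebra_simps)
    have "Gf n S (y#w) = N * (N - J) * init_prob_aux n S (y#w) - J * (2 * N - J) * Qf n S (y#w)"
      using diff key by linarith
    then show ?thesis by (simp only: N_def J_def)
  next
    case False
    have J1: "J + 1 \<le> N"
    proof -
      have "S \<subset> {..<n}" using S y False by auto
      then have "card S < n" using psubset_card_mono[of "{..<n}" S] by simp
      then show ?thesis unfolding J_def N_def by linarith
    qed
    have J0: "J \<ge> 0" unfolding J_def by simp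
    have D: "(1 + J) * (2 * N - (1 + J)) > 0" using J0 J1 by (intro mult_pos_pos) auto
    have c: "c * ((1 + J) * (2 * N - (1 + J))) = N"
    proof -
      have "c = N / ((1 + J) * (2 * N - (1 + J)))" unfolding c_def J_def N_def by simp
      then show ?thesis using D by (metis less_irrefl eq_divide_eq)
    qed
    define sy where "sy = step_prob n S y"
    have Sy: "insert y S \<subseteq> {..<n}" using S y by auto
    have cy: "real (card (insert y S)) = 1 + J" using fin False unfolding J_def by simp
    have IH: "Gf n (insert y S) w = N * (N - (1 + J)) * init_prob_aux n (insert y S) w
        - (1 + J) * (2 * N - (1 + J)) * Qf n (insert y S) w"
      using Cons.IH[OF Sy w Cons.prems(3)] cy unfolding N_def by simp
    have Q: "Qf n S (y#w) = sy * (c * init_prob_aux n (insert y S) w + Qf n (insert y S) w)"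
      using Qf_Cons_out[OF S y False, of w] unfolding sy_def c_def .
    have G: "Gf n S (y#w) = (2 * (N - J) - 1) * Qf n S (y#w) + sy * Gf n (insert y S) w"
      using Gf_Cons[OF S y w] kk unfolding sy_def by simp
    have P: "init_prob_aux n S (y#w) = sy * init_prob_aux n (insert y S) w"
      by (simp add: sy_def)
    have "Gf n S (y#w) - (N * (N - J) * init_prob_aux n S (y#w) - J * (2 * N - J) * Qf n S (y#w))
        = sy * init_prob_aux n (insert y S) w * (c * ((1 + J) * (2 * N - (1 + J))) - N)"
      unfolding G IH P Q by (simp add: algebra_simps)
    then have "Gf n S (y#w) = N * (N - J) * init_prob_aux n S (y#w) - J * (2 * N - J) * Qf n S (y#w)"
      using c by simp
    then show ?thesis by (simp only: N_def J_def)
  qed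
qed

lemma stationary_identity:
  assumes "set ls \<subseteq> {..<n}" "n > 0"
  shows "(\<Sum>p\<in>{..<n} \<times> {..<n}. \<Sum>ls'\<in>lists_of {..<n} (Suc (length ls)).
      if fdel p ls' = ls then init_prob n ls' else 0) = real n ^ 2 * init_prob n ls"
  using Gf_closed[of "{}" n ls] assms unfolding Gf_def init_prob_def by (simp add: power2_eq_square)

lemma init_prob_aux_nonneg: "S \<subseteq> {..<n} \<Longrightarrow> init_prob_aux n S ls \<ge> 0"
proof (induction ls arbitrary: S)
  case (Cons q ls)
  show ?case
  proof (cases "q < n")
    case True
    then have "insert q S \<subseteq> {..<n}" using Cons.prems by auto
    then show ?thesis using Cons.IH step_nonneg[OF Cons.prems] by simp
  next
    case False then show ?thesis by (simp add: step_prob_def)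
  qed
qed simp

lemma init_prob_aux_bad: "\<not> set ls \<subseteq> {..<n} \<Longrightarrow> init_prob_aux n S ls = 0"
  by (induction ls arbitrary: S) (auto simp: step_prob_def)

lemma sum_init_prob_aux:
  assumes "S \<subseteq> {..<n}" "n > 0"
  shows "(\<Sum>ls\<in>lists_of {..<n} m. init_prob_aux n S ls) = 1"
  using assms
proof (induction m arbitrary: S)
  case (Suc m)
  have "(\<Sum>ls\<in>lists_of {..<n} (Suc m). init_prob_aux n S ls)
      = (\<Sum>z<n. step_prob n S z * (\<Sum>r\<in>lists_of {..<n} m. init_prob_aux n (insert z S) r))"
    by (simp add: sum_lists_of_Suc sum_distrib_left)
  also have "\<dots> = (\<Sum>z<n. step_prob n S z)"
    using Suc by (intro sum.cong) auto
  finally show ?case using step_sum[OF Suc.prems] by simp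
qed simp

lemma avoid_bound:
  assumes "S \<subseteq> {..<n}" "n > 0" "q < n"
  shows "(\<Sum>ls\<in>lists_of {..<n} m. if (\<forall>i<m. B i \<longrightarrow> ls!i \<noteq> q) then init_prob_aux n S ls else 0)
     \<le> (1 - 1 / (2 * real n)) ^ card {i. i < m \<and> B i}"
  using assms
proof (induction m arbitrary: S B)
  case 0
  then show ?case by simp
next
  case (Suc m)
  define x where "x = 1 - 1 / (2 * real n)"
  have x0: "x \<ge> 0" unfolding x_def using Suc.prems by (simp add: field_simps)
  define bd where "bd = x ^ card {i. i < m \<and> B (Suc i)}"
  have bd0: "bd \<ge> 0" unfolding bd_def using x0 by simp
  have split: "(\<forall>i<Suc m. B i \<longrightarrow> (z#r)!i \<noteq> q) = ((B 0 \<longrightarrow> z \<noteq> q) \<and> (\<forall>i<m. B (Suc i) \<longrightarrow> r!i \<noteq> q))" for z r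
    by (auto simp: less_Suc_eq_0_disj)
  have "(\<Sum>ls\<in>lists_of {..<n} (Suc m). if (\<forall>i<Suc m. B i \<longrightarrow> ls!i \<noteq> q) then init_prob_aux n S ls else 0)
     = (\<Sum>z<n. if (B 0 \<longrightarrow> z \<noteq> q) then step_prob n S z *
         (\<Sum>r\<in>lists_of {..<n} m. if (\<forall>i<m. B (Suc i) \<longrightarrow> r!i \<noteq> q) then init_prob_aux n (insert z S) r else 0) else 0)"
    by (simp add: sum_lists_of_Suc split sum_distrib_left if_distrib cong: if_cong) (auto intro!: sum.cong)
  also have "\<dots> \<le> (\<Sum>z<n. if (B 0 \<longrightarrow> z \<noteq> q) then step_prob n S z * bd else 0)"
  proof (intro sum_mono)
    fix z assume z: "z \<in> {..<n}"
    have "insert z S \<subseteq> {..<n}" using z Suc.prems by auto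
    then have "(\<Sum>r\<in>lists_of {..<n} m. if (\<forall>i<m. B (Suc i) \<longrightarrow> r!i \<noteq> q) then init_prob_aux n (insert z S) r else 0) \<le> bd"
      using Suc.IH[of "insert z S" "\<lambda>i. B (Suc i)"] Suc.prems unfolding bd_def x_def by simp
    then show "(if (B 0 \<longrightarrow> z \<noteq> q) then step_prob n S z *
         (\<Sum>r\<in>lists_of {..<n} m. if (\<forall>i<m. B (Suc i) \<longrightarrow> r!i \<noteq> q) then init_prob_aux n (insert z S) r else 0) else 0)
         \<le> (if (B 0 \<longrightarrow> z \<noteq> q) then step_prob n S z * bd else 0)"
      using step_nonneg[OF Suc.prems(1), of z] by (simp add: mult_left_mono)
  qed
  also have "\<dots> = bd * (\<Sum>z<n. if (B 0 \<longrightarrow> z \<noteq> q) then step_prob n S z else 0)"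
    by (simp add: sum_distrib_left if_distrib mult.commute cong: if_cong)
  also have "\<dots> \<le> bd * (if B 0 then x else 1)"
  proof (intro mult_left_mono bd0)
    show "(\<Sum>z<n. if (B 0 \<longrightarrow> z \<noteq> q) then step_prob n S z else 0) \<le> (if B 0 then x else 1)"
    proof (cases "B 0")
      case True
      have "(\<Sum>z<n. step_prob n S z) = step_prob n S q + (\<Sum>z\<in>{..<n} - {q}. step_prob n S z)"
        using Suc.prems by (simp add: sum.remove)
      moreover have "(\<Sum>z<n. if (B 0 \<longrightarrow> z \<noteq> q) then step_prob n S z else 0) = (\<Sum>z\<in>{..<n} - {q}. step_prob n S z)"
        using True by (simp add: sum.inter_filter[symmetric]) (intro sum.cong, auto)
      ultimately show ?thesis using True step_sum[OF Suc.prems(1,2)] step_lower[OF Suc.prems(1,3)]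
        unfolding x_def by simp
    next
      case False
      then show ?thesis using step_sum[OF Suc.prems(1,2)] by simp
    qed
  qed
  also have "\<dots> = x ^ card {i. i < Suc m \<and> B i}"
  proof -
    have e: "{i. i < Suc m \<and> B i} = (if B 0 then {0} else {}) \<union> Suc ` {i. i < m \<and> B (Suc i)}"
      by (auto simp: less_Suc_eq_0_disj)
    have "card {i. i < Suc m \<and> B i} = (if B 0 then 1 else 0) + card {i. i < m \<and> B (Suc i)}"
      unfolding e by (subst card_Un_disjoint) (auto simp: card_image)
    then show ?thesis unfolding bd_def by (simp add: mult.commute)
  qed
  finally show ?case unfolding x_def .
qed

lemma fdel_length: "length (fdel p ls) = length ls - 1"
  by (induction p ls rule: fdel.induct) auto

lemma fdel_set: "set (fdel p ls) \<subseteq> set ls"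
  by (induction p ls rule: fdel.induct) auto

lemma ex_le_Suc: "(\<exists>j\<le>Suc i. Q j) = (Q 0 \<or> (\<exists>j\<le>i. Q (Suc j)))"
  apply auto
  subgoal for j by (cases j) auto
  done

lemma fdel_nth:
  "i < length ls - 1 \<Longrightarrow> fdel p ls ! i = (if \<exists>j\<le>i. ls!j = fst p \<or> ls!j = snd p then ls ! Suc i else ls ! i)"
proof (induction p ls arbitrary: i rule: fdel.induct)
  case (2 p z r)
  show ?case
  proof (cases "r = []")
    case True then show ?thesis using 2 by simp
  next
    case False
    show ?thesis
    proof (cases "z = fst p \<or> z = snd p")
      case True then show ?thesis using False 2 by (auto intro: exI[of _ 0])
    next
      case nz: False
      show ?thesis
      proof (cases i)
        case 0 then show ?thesis using False nz by auto
      next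
        case (Suc i')
        have IH: "fdel p r ! i' = (if \<exists>j\<le>i'. r!j = fst p \<or> r!j = snd p then r ! Suc i' else r ! i')"
          using 2(1)[OF False nz] 2(2) Suc by simp
        have "(\<exists>j\<le>i. (z#r)!j = fst p \<or> (z#r)!j = snd p) = (\<exists>j\<le>i'. r!j = fst p \<or> r!j = snd p)"
          using nz Suc by (simp add: ex_le_Suc)
        then show ?thesis using IH False nz Suc by auto
      qed
    qed
  qed
qed simp

locale mq =
  fixes M :: "'a measure" and n :: nat and L :: "'a \<Rightarrow> nat \<Rightarrow> nat" and c :: "'a \<Rightarrow> nat \<Rightarrow> nat \<times> nat"
  assumes mq: "mq_long_run M n L c" and npos: "n > 0"

sublocale mq \<subseteq> prob_space M using mq unfolding mq_long_run_def by auto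

context mq
begin

lemma measL[measurable]: "(\<lambda>\<omega>. L \<omega> k) \<in> measurable M (count_space UNIV)"
  using mq unfolding mq_long_run_def by auto

lemma measc[measurable]: "(\<lambda>\<omega>. c \<omega> t) \<in> measurable M (count_space UNIV)"
  using mq unfolding mq_long_run_def by auto

lemma predL[measurable]: "Measurable.pred M (\<lambda>\<omega>. L \<omega> k < x)" "Measurable.pred M (\<lambda>\<omega>. L \<omega> k = x)"
  by (rule measurable_compose[OF measL], simp)+

lemma predc[measurable]: "Measurable.pred M (\<lambda>\<omega>. c \<omega> t \<in> X)" "Measurable.pred M (\<lambda>\<omega>. c \<omega> t = p)"
  by (rule measurable_compose[OF measc], simp)+

definition cyl0 :: "nat list \<Rightarrow> nat \<Rightarrow> (nat \<Rightarrow> nat \<times> nat) \<Rightarrow> 'a set" where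
  "cyl0 ls T ps = {\<omega> \<in> space M. (\<forall>i<length ls. L \<omega> i = ls ! i) \<and> (\<forall>t<T. c \<omega> t = ps t)}"

lemma cyl0_sets[measurable]: "cyl0 ls T ps \<in> sets M"
  unfolding cyl0_def by measurable

lemma cyl0_measure:
  assumes "\<forall>t<T. ps t \<in> {..<n} \<times> {..<n}"
  shows "measure M (cyl0 ls T ps) = init_prob n ls * (1 / (real n)^2) ^ T"
  using mq assms unfolding mq_long_run_def cyl0_def by (simp add: atLeast0LessThan)

lemma measure_cyl_union:
  assumes I: "finite I" "I \<subseteq> {ls. length ls = m} \<times> (PiE {..<T} (\<lambda>_. {..<n} \<times> {..<n}))"
  shows "measure M (\<Union>(ls,ps)\<in>I. cyl0 ls T ps) = (\<Sum>(ls,ps)\<in>I. init_prob n ls * (1 / (real n)^2) ^ T)"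
proof -
  have "measure M (\<Union>i\<in>I. (\<lambda>(ls,ps). cyl0 ls T ps) i) = (\<Sum>i\<in>I. measure M ((\<lambda>(ls,ps). cyl0 ls T ps) i))"
  proof (rule measure_finite_Union[OF I(1)])
    show "(\<lambda>(ls, ps). cyl0 ls T ps) ` I \<subseteq> sets M" by auto
    show "disjoint_family_on (\<lambda>(ls, ps). cyl0 ls T ps) I"
      unfolding disjoint_family_on_def
    proof (intro ballI impI)
      fix x y assume x: "x \<in> I" and y: "y \<in> I" and ne0: "x \<noteq> y"
      obtain ls ps where xe: "x = (ls,ps)" by (cases x)
      obtain ls' ps' where ye: "y = (ls',ps')" by (cases y)
      have in1: "(ls, ps) \<in> I" and in2: "(ls', ps') \<in> I" and ne: "ls = ls' \<longrightarrow> ps \<noteq> ps'"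
        using x y ne0 xe ye by auto
      show "(\<lambda>(ls, ps). cyl0 ls T ps) x \<inter> (\<lambda>(ls, ps). cyl0 ls T ps) y = {}"
        unfolding xe ye prod.case
      proof (rule ccontr)
        assume "cyl0 ls T ps \<inter> cyl0 ls' T ps' \<noteq> {}"
        then obtain \<omega> where w1: "\<omega> \<in> cyl0 ls T ps" and w2: "\<omega> \<in> cyl0 ls' T ps'" by auto
        have l: "length ls = m" "length ls' = m" using in1 in2 I(2) by auto
        have "ls = ls'" using w1 w2 l unfolding cyl0_def by (auto intro!: nth_equalityI)
        moreover have "ps = ps'"
        proof (rule PiE_ext)
          show "ps \<in> PiE {..<T} (\<lambda>_. {..<n} \<times> {..<n})" "ps' \<in> PiE {..<T} (\<lambda>_. {..<n} \<times> {..<n})"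
            using in1 in2 I(2) by auto
          show "\<And>x. x \<in> {..<T} \<Longrightarrow> ps x = ps' x" using w1 w2 unfolding cyl0_def by auto
        qed
        ultimately show False using ne by simp
      qed
    qed
    show "\<And>i. i \<in> I \<Longrightarrow> emeasure M ((\<lambda>(ls, ps). cyl0 ls T ps) i) \<noteq> \<infinity>" by auto
  qed
  also have "\<dots> = (\<Sum>(ls,ps)\<in>I. init_prob n ls * (1 / (real n)^2) ^ T)"
    using I(2) by (intro sum.cong) (auto simp: cyl0_measure PiE_iff)
  finally show ?thesis by (simp add: case_prod_beta)
qed

lemma box_measure:
  "measure M {\<omega>\<in>space M. (\<forall>i<m. L \<omega> i < n) \<and> (\<forall>s<T. c \<omega> s \<in> {..<n} \<times> {..<n})} = 1"
proof -
  let ?I = "lists_of {..<n} m \<times> PiE {..<T} (\<lambda>_. {..<n} \<times> {..<n})"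
  have eq: "{\<omega>\<in>space M. (\<forall>i<m. L \<omega> i < n) \<and> (\<forall>s<T. c \<omega> s \<in> {..<n} \<times> {..<n})}
      = (\<Union>(ls,ps)\<in>?I. cyl0 ls T ps)"
  proof (intro equalityI subsetI)
    fix \<omega> assume w: "\<omega> \<in> {\<omega>\<in>space M. (\<forall>i<m. L \<omega> i < n) \<and> (\<forall>s<T. c \<omega> s \<in> {..<n} \<times> {..<n})}"
    have "(map (L \<omega>) [0..<m], restrict (c \<omega>) {..<T}) \<in> ?I"
      using w by (auto simp: lists_of_def)
    moreover have "\<omega> \<in> cyl0 (map (L \<omega>) [0..<m]) T (restrict (c \<omega>) {..<T})"
      using w unfolding cyl0_def by auto
    ultimately show "\<omega> \<in> (\<Union>(ls,ps)\<in>?I. cyl0 ls T ps)" by blast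
  next
    fix \<omega> assume "\<omega> \<in> (\<Union>(ls,ps)\<in>?I. cyl0 ls T ps)"
    then obtain ls ps where "(ls,ps) \<in> ?I" "\<omega> \<in> cyl0 ls T ps" by auto
    then show "\<omega> \<in> {\<omega>\<in>space M. (\<forall>i<m. L \<omega> i < n) \<and> (\<forall>s<T. c \<omega> s \<in> {..<n} \<times> {..<n})}"
      unfolding cyl0_def lists_of_def by (auto simp: PiE_iff) (metis lessThan_iff nth_mem subsetD)
  qed
  have "measure M (\<Union>(ls,ps)\<in>?I. cyl0 ls T ps) = (\<Sum>(ls,ps)\<in>?I. init_prob n ls * (1 / (real n)^2) ^ T)"
  proof (rule measure_cyl_union[of _ m])
    show "finite ?I" by (simp add: finite_PiE)
    show "?I \<subseteq> {ls. length ls = m} \<times> PiE {..<T} (\<lambda>_. {..<n} \<times> {..<n})" by (auto simp: lists_of_def)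
  qed
  also have "\<dots> = (\<Sum>ls\<in>lists_of {..<n} m. init_prob n ls) * (real (card (PiE {..<T} (\<lambda>_. {..<n} \<times> {..<n}))) * (1 / (real n)^2) ^ T)"
    by (simp add: sum.cartesian_product[symmetric] sum_distrib_right sum_distrib_left mult_ac)
  also have "(\<Sum>ls\<in>lists_of {..<n} m. init_prob n ls) = 1"
    unfolding init_prob_def using sum_init_prob_aux[of "{}" n m] npos by simp
  also have "real (card (PiE {..<T} (\<lambda>_. {..<n} \<times> {..<n}))) = (real n ^ 2) ^ T"
    by (simp add: card_PiE power2_eq_square)
  finally have X: "measure M (\<Union>(ls,ps)\<in>?I. cyl0 ls T ps) = 1"
    using npos by (simp add: power_one_over[symmetric] power_mult_distrib[symmetric])
  show ?thesis unfolding eq by (rule X)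
qed

lemma AE_labels: "AE \<omega> in M. \<forall>k. L \<omega> k < n"
proof (subst AE_all_countable, intro allI)
  fix k
  have "AE \<omega> in M. \<omega> \<in> {\<omega>\<in>space M. (\<forall>i<Suc k. L \<omega> i < n) \<and> (\<forall>s<0. c \<omega> s \<in> {..<n} \<times> {..<n})}"
    by (rule AE_prob_1) (rule box_measure)
  then show "AE \<omega> in M. L \<omega> k < n" by eventually_elim auto
qed

lemma AE_choices: "AE \<omega> in M. \<forall>t. c \<omega> t \<in> {..<n} \<times> {..<n}"
proof (subst AE_all_countable, intro allI)
  fix t
  have "AE \<omega> in M. \<omega> \<in> {\<omega>\<in>space M. (\<forall>i<0. L \<omega> i < n) \<and> (\<forall>s<Suc t. c \<omega> s \<in> {..<n} \<times> {..<n})}"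
    by (rule AE_prob_1) (rule box_measure)
  then show "AE \<omega> in M. c \<omega> t \<in> {..<n} \<times> {..<n}" by eventually_elim auto
qed

lemma AE_inf1: "AE \<omega> in M. q < n \<longrightarrow> (\<exists>k'\<ge>k. L \<omega> k' = q)"
proof -
  show "AE \<omega> in M. q < n \<longrightarrow> (\<exists>k'\<ge>k. L \<omega> k' = q)"
  proof (cases "q < n")
    case False then show ?thesis by simp
  next
    case q: True
    define N where "N = {\<omega>\<in>space M. (\<forall>i. L \<omega> i < n) \<and> (\<forall>k'\<ge>k. L \<omega> k' \<noteq> q)}"
    have N: "N \<in> sets M" unfolding N_def by measurable
    define x where "x = 1 - 1 / (2 * real n)"
    define ps0 :: "nat \<Rightarrow> nat \<times> nat" where "ps0 = (\<lambda>_. undefined)"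
    have bound: "measure M N \<le> x ^ m" for m
    proof -
      let ?LS = "{ls\<in>lists_of {..<n} (k+m). \<forall>i<k+m. k \<le> i \<longrightarrow> ls!i \<noteq> q}"
      have sub: "N \<subseteq> (\<Union>(ls,ps)\<in>?LS \<times> {ps0}. cyl0 ls 0 ps)"
      proof
        fix \<omega> assume w: "\<omega> \<in> N"
        have "(map (L \<omega>) [0..<k+m], ps0) \<in> ?LS \<times> {ps0}"
          using w unfolding N_def by (auto simp: lists_of_def)
        moreover have "\<omega> \<in> cyl0 (map (L \<omega>) [0..<k+m]) 0 ps0"
          using w unfolding N_def cyl0_def by auto
        ultimately show "\<omega> \<in> (\<Union>(ls,ps)\<in>?LS \<times> {ps0}. cyl0 ls 0 ps)" by blast
      qed
      have "measure M N \<le> measure M (\<Union>(ls,ps)\<in>?LS \<times> {ps0}. cyl0 ls 0 ps)"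
        by (rule finite_measure_mono[OF sub]) auto
      also have "\<dots> = (\<Sum>(ls,ps)\<in>?LS \<times> {ps0}. init_prob n ls * (1 / (real n)^2) ^ 0)"
      proof -
        have "finite (?LS \<times> {ps0})" by simp
        moreover have "?LS \<times> {ps0} \<subseteq> {ls. length ls = k+m} \<times> PiE {..<0::nat} (\<lambda>_. {..<n} \<times> {..<n})"
          by (auto simp: lists_of_def PiE_iff ps0_def)
        ultimately show ?thesis by (rule measure_cyl_union)
      qed
      also have "\<dots> = (\<Sum>ls\<in>?LS. init_prob n ls)"
        by (simp add: sum.cartesian_product[symmetric])
      also have "\<dots> = (\<Sum>ls\<in>lists_of {..<n} (k+m). if (\<forall>i<k+m. k \<le> i \<longrightarrow> ls!i \<noteq> q) then init_prob n ls else 0)"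
        by (simp add: sum.inter_filter)
      also have "\<dots> \<le> x ^ card {i. i < k + m \<and> k \<le> i}"
        unfolding init_prob_def x_def using avoid_bound[of "{}" n q "k+m" "\<lambda>i. k \<le> i"] npos q by simp
      also have "card {i. i < k + m \<and> k \<le> i} = m"
      proof -
        have "{i. i < k + m \<and> k \<le> i} = {k..<k+m}" by auto
        then show ?thesis by simp
      qed
      finally show ?thesis .
    qed
    have x: "x < 1" "0 \<le> x" unfolding x_def using npos by (simp_all add: field_simps)
    have "measure M N \<le> 0"
      by (rule LIMSEQ_le_const[OF LIMSEQ_realpow_zero[OF x(2,1)]]) (use bound in auto)
    then have "prob N = 0" using measure_nonneg[of M N] by simp
    then have "AE \<omega> in M. \<omega> \<notin> N" using prob_eq_0[OF N] by simp
    then show ?thesis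
      using AE_labels AE_space by eventually_elim (auto simp: N_def)
  qed
qed

lemma AE_inf: "AE \<omega> in M. \<forall>q<n. \<forall>k. \<exists>k'\<ge>k. L \<omega> k' = q"
proof -
  have "AE \<omega> in M. \<forall>q. \<forall>k. q < n \<longrightarrow> (\<exists>k'\<ge>k. L \<omega> k' = q)"
    by (subst AE_all_countable, intro allI, subst AE_all_countable, intro allI) (rule AE_inf1)
  then show ?thesis by eventually_elim auto
qed

definition Good :: "'a set" where
  "Good = {\<omega>\<in>space M. (\<forall>k. L \<omega> k < n) \<and> (\<forall>t. c \<omega> t \<in> {..<n} \<times> {..<n}) \<and> (\<forall>q<n. \<forall>k. \<exists>k'\<ge>k. L \<omega> k' = q)}"

lemma Good_sets[measurable]: "Good \<in> sets M"
  unfolding Good_def by measurable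

lemma AE_Good: "AE \<omega> in M. \<omega> \<in> Good"
  using AE_labels AE_choices AE_inf AE_space by eventually_elim (auto simp: Good_def)

lemma prob_Good: "prob Good = 1"
  using AE_Good prob_eq_1[OF Good_sets] by simp

end

lemma enum_unique:
  fixes S :: "nat set"
  assumes S: "infinite S" and f: "strict_mono f" and r: "range f = S"
  shows "enumerate S i = f i"
proof (induction i)
  case 0
  show ?case unfolding enumerate_0
  proof (rule Least_equality)
    show "f 0 \<in> S" using r by auto
    fix y assume "y \<in> S"
    then obtain j where "y = f j" using r by auto
    then show "f 0 \<le> y" using f by (simp add: strict_mono_less_eq)
  qed
next
  case (Suc i)
  show ?case unfolding enumerate_Suc''[OF S] Suc
  proof (rule Least_equality)
    show "f (Suc i) \<in> S \<and> f i < f (Suc i)" using r f by (auto simp: strict_mono_def)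
    fix y assume y: "y \<in> S \<and> f i < y"
    then obtain j where j: "y = f j" using r by auto
    then have "i < j" using y f by (simp add: strict_mono_less)
    then show "f (Suc i) \<le> y" using f j by (simp add: strict_mono_less_eq)
  qed
qed

lemma enum_remove:
  fixes S :: "nat set"
  assumes S: "infinite S"
  shows "enumerate (S - {enumerate S r}) i = (if i < r then enumerate S i else enumerate S (Suc i))"
proof -
  define f where "f i = (if i < r then enumerate S i else enumerate S (Suc i))" for i
  have S': "infinite (S - {enumerate S r})" using S by simp
  have sm: "strict_mono f"
    unfolding strict_mono_def f_def using S by auto
  have rg: "range f = S - {enumerate S r}"
  proof (intro equalityI subsetI)
    fix x assume "x \<in> range f"
    then obtain i where x: "x = f i" by auto
    show "x \<in> S - {enumerate S r}"
      using x S enumerate_in_set[OF S] inj_enumerate[OF S] unfolding f_def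
      by (auto simp: inj_eq)
  next
    fix x assume x: "x \<in> S - {enumerate S r}"
    then obtain j where j: "enumerate S j = x" using enumerate_Ex[OF S] by blast
    then have "j \<noteq> r" using x by auto
    show "x \<in> range f"
    proof (cases "j < r")
      case True then show ?thesis using j unfolding f_def by (auto intro!: image_eqI[of _ _ j])
    next
      case False
      then obtain j' where "j = Suc j'" "r \<le> j'" using \<open>j \<noteq> r\<close>
        by (metis Suc_le_eq le_neq_implies_less not0_implies_Suc not_le not_less0)
      then show ?thesis using j unfolding f_def by (auto intro!: image_eqI[of _ _ j'])
    qed
  qed
  show ?thesis using enum_unique[OF S' sm rg] unfolding f_def .
qed

lemma top_pos_enum:
  assumes P: "infinite P" and ex: "\<exists>k\<in>P. Lw k = q"
  shows "top_pos Lw P q = enumerate P (LEAST i. Lw (enumerate P i) = q)"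
    and "\<exists>i. Lw (enumerate P i) = q"
proof -
  show exi: "\<exists>i. Lw (enumerate P i) = q"
    using ex enumerate_Ex[OF P] by metis
  show "top_pos Lw P q = enumerate P (LEAST i. Lw (enumerate P i) = q)"
    unfolding top_pos_def
  proof (rule Least_equality)
    show "enumerate P (LEAST i. Lw (enumerate P i) = q) \<in> P \<and> Lw (enumerate P (LEAST i. Lw (enumerate P i) = q)) = q"
      using enumerate_in_set[OF P] LeastI_ex[OF exi] by auto
    fix y assume y: "y \<in> P \<and> Lw y = q"
    then obtain j where j: "enumerate P j = y" using enumerate_Ex[OF P] by blast
    then have le: "(LEAST i. Lw (enumerate P i) = q) \<le> j" using y by (auto intro: Least_le)
    show "enumerate P (LEAST i. Lw (enumerate P i) = q) \<le> y"
      using le j enumerate_mono_le_iff[OF P] by metis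
  qed
qed

locale det =
  fixes n :: nat and Lw :: "nat \<Rightarrow> nat" and cw :: "nat \<Rightarrow> nat \<times> nat"
  assumes HL: "\<forall>k. Lw k < n" and Hc: "\<forall>t. cw t \<in> {..<n} \<times> {..<n}"
    and Hinf: "\<forall>q<n. \<forall>k. \<exists>k'\<ge>k. Lw k' = q"
begin

lemma cofinite: "finite (UNIV - present Lw cw t)"
proof (induction t)
  case (Suc t)
  have "UNIV - present Lw cw (Suc t) \<subseteq> (UNIV - present Lw cw t) \<union> {del_pos Lw (present Lw cw t) (cw t)}"
    by auto
  then show ?case using Suc finite_subset by blast
qed simp

lemma pinf: "infinite (present Lw cw t)"
  using cofinite[of t] by (metis finite_Diff2 finite_UNIV infinite_UNIV_nat Diff_empty finite_Un Un_Diff_cancel2 sup_top_left)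

lemma queue_present: "q < n \<Longrightarrow> \<exists>k\<in>present Lw cw t. Lw k = q"
proof -
  assume q: "q < n"
  obtain K where K: "\<forall>x\<in>UNIV - present Lw cw t. x < K"
    using cofinite[of t] finite_nat_bounded by blast
  obtain k where k: "k \<ge> K" "Lw k = q" using Hinf q by blast
  have "k \<in> present Lw cw t"
  proof (rule ccontr)
    assume "k \<notin> present Lw cw t"
    then have "k < K" using K by auto
    then show False using k by simp
  qed
  then show ?thesis using k by blast
qed

definition XX :: "nat \<Rightarrow> nat \<Rightarrow> nat" where
  "XX t i = Lw (enumerate (present Lw cw t) i)"

definition hit :: "nat \<Rightarrow> nat \<Rightarrow> bool" where
  "hit t j \<longleftrightarrow> XX t j = fst (cw t) \<or> XX t j = snd (cw t)"

definition rr :: "nat \<Rightarrow> nat" where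
  "rr t = min (LEAST i. XX t i = fst (cw t)) (LEAST i. XX t i = snd (cw t))"

lemma del_enum: "deleted Lw cw t = enumerate (present Lw cw t) (rr t)"
proof -
  let ?P = "present Lw cw t"
  have a: "fst (cw t) < n" and b: "snd (cw t) < n" using Hc by (auto simp: mem_Times_iff)
  have "deleted Lw cw t = min (top_pos Lw ?P (fst (cw t))) (top_pos Lw ?P (snd (cw t)))"
    unfolding deleted_def del_pos_def ..
  also have "\<dots> = min (enumerate ?P (LEAST i. XX t i = fst (cw t))) (enumerate ?P (LEAST i. XX t i = snd (cw t)))"
    using top_pos_enum(1)[OF pinf queue_present[OF a]] top_pos_enum(1)[OF pinf queue_present[OF b]]
    unfolding XX_def by simp
  also have "\<dots> = enumerate ?P (rr t)"
    unfolding rr_def using pinf[of t] by (simp add: min_def)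
  finally show ?thesis .
qed

lemma rr_iff: "(\<exists>j\<le>i. hit t j) \<longleftrightarrow> rr t \<le> i"
proof -
  have a: "fst (cw t) < n" and b: "snd (cw t) < n" using Hc by (auto simp: mem_Times_iff)
  have ea: "\<exists>i. XX t i = fst (cw t)" using top_pos_enum(2)[OF pinf queue_present[OF a]] unfolding XX_def .
  have eb: "\<exists>i. XX t i = snd (cw t)" using top_pos_enum(2)[OF pinf queue_present[OF b]] unfolding XX_def .
  show ?thesis
  proof
    assume "\<exists>j\<le>i. hit t j"
    then obtain j where j: "j \<le> i" "hit t j" by blast
    then show "rr t \<le> i" unfolding hit_def rr_def
      by (auto intro: Least_le le_trans min.coboundedI1 min.coboundedI2)
  next
    assume "rr t \<le> i"
    moreover have "hit t (rr t)"
      unfolding hit_def rr_def min_def using LeastI_ex[OF ea] LeastI_ex[OF eb] by auto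
    ultimately show "\<exists>j\<le>i. hit t j" by blast
  qed
qed

lemma XX_Suc: "XX (Suc t) i = (if \<exists>j\<le>i. hit t j then XX t (Suc i) else XX t i)"
proof -
  have "present Lw cw (Suc t) = present Lw cw t - {enumerate (present Lw cw t) (rr t)}"
    using del_enum[of t] unfolding deleted_def by simp
  then have "enumerate (present Lw cw (Suc t)) i
      = (if i < rr t then enumerate (present Lw cw t) i else enumerate (present Lw cw t) (Suc i))"
    using enum_remove[OF pinf] by simp
  then show ?thesis unfolding XX_def using rr_iff[of i t] by auto
qed

lemma rank_rr: "rank_error Lw cw t = rr t"
proof -
  let ?P = "present Lw cw t"
  have "{k \<in> ?P. k < deleted Lw cw t} = enumerate ?P ` {..<rr t}"
  proof (intro equalityI subsetI)
    fix k assume k: "k \<in> {k \<in> ?P. k < deleted Lw cw t}"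
    then obtain j where j: "enumerate ?P j = k" using enumerate_Ex[OF pinf] by blast
    then have "j < rr t" using k del_enum[of t] pinf[of t] by auto
    then show "k \<in> enumerate ?P ` {..<rr t}" using j by auto
  next
    fix k assume "k \<in> enumerate ?P ` {..<rr t}"
    then show "k \<in> {k \<in> ?P. k < deleted Lw cw t}"
      using del_enum[of t] pinf[of t] enumerate_in_set[OF pinf] by auto
  qed
  moreover have "card (enumerate ?P ` {..<rr t}) = rr t"
    by (simp add: card_image[OF inj_on_subset[OF inj_enumerate[OF pinf] subset_UNIV]])
  ultimately show ?thesis unfolding rank_error_def by simp
qed

lemma rank_le: "(\<exists>j\<le>K. hit t j) \<Longrightarrow> rank_error Lw cw t \<le> K"
  using rank_rr rr_iff by simp

lemma XX_lt: "XX t i < n"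
  unfolding XX_def using HL by simp

end

lemma enumerate_UNIV_nat: "enumerate (UNIV :: nat set) i = i"
  using enum_unique[of UNIV id] by (simp add: strict_mono_def)

definition pcons :: "nat \<times> nat \<Rightarrow> (nat \<Rightarrow> nat \<times> nat) \<Rightarrow> nat \<Rightarrow> nat \<times> nat" where
  "pcons p ps s = (case s of 0 \<Rightarrow> p | Suc s' \<Rightarrow> ps s')"

context mq
begin

lemma det_Good: "\<omega> \<in> Good \<Longrightarrow> det n (L \<omega>) (c \<omega>)"
  unfolding Good_def det_def by auto

definition X :: "nat \<Rightarrow> 'a \<Rightarrow> nat \<Rightarrow> nat" where
  "X t \<omega> i = L \<omega> (enumerate (present (L \<omega>) (c \<omega>) t) i)"

lemma X_Suc:
  assumes G: "\<omega> \<in> Good"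
  shows "X (Suc t) \<omega> i =
   (if \<exists>j\<le>i. X t \<omega> j = fst (c \<omega> t) \<or> X t \<omega> j = snd (c \<omega> t) then X t \<omega> (Suc i) else X t \<omega> i)"
proof -
  interpret d: det n "L \<omega>" "c \<omega>" by (rule det_Good[OF G])
  show ?thesis using d.XX_Suc[of t i] unfolding d.XX_def d.hit_def X_def .
qed

lemma X_lt: "\<omega> \<in> Good \<Longrightarrow> X t \<omega> i < n"
  unfolding X_def Good_def by auto

lemma X_0: "X 0 \<omega> i = L \<omega> i"
  unfolding X_def by (simp add: enumerate_UNIV_nat)

definition Cyl :: "nat \<Rightarrow> nat list \<Rightarrow> nat \<Rightarrow> (nat \<Rightarrow> nat \<times> nat) \<Rightarrow> 'a set" where
  "Cyl t ls T ps = {\<omega> \<in> Good. (\<forall>i<length ls. X t \<omega> i = ls ! i) \<and> (\<forall>s<T. c \<omega> (t + s) = ps s)}"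

lemma Cyl_decomp:
  "Cyl (Suc t) ls T ps = (\<Union>(ls',p)\<in>{(ls',p)\<in>lists_of {..<n} (Suc (length ls)) \<times> ({..<n} \<times> {..<n}). fdel p ls' = ls}.
      Cyl t ls' (Suc T) (pcons p ps))"
proof (intro equalityI subsetI)
  fix \<omega> assume w: "\<omega> \<in> Cyl (Suc t) ls T ps"
  then have G: "\<omega> \<in> Good" unfolding Cyl_def by auto
  define ls' where "ls' = map (X t \<omega>) [0..<Suc (length ls)]"
  define p where "p = c \<omega> t"
  have nth': "\<And>j. j < Suc (length ls) \<Longrightarrow> ls' ! j = X t \<omega> j" unfolding ls'_def
    by (simp del: upt_Suc)
  have "ls' \<in> lists_of {..<n} (Suc (length ls))"
    unfolding ls'_def lists_of_def using X_lt[OF G] by auto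
  moreover have "p \<in> {..<n} \<times> {..<n}" using G unfolding Good_def p_def by auto
  moreover have "fdel p ls' = ls"
  proof (rule nth_equalityI)
    show "length (fdel p ls') = length ls" by (simp add: fdel_length ls'_def)
    fix i assume i: "i < length (fdel p ls')"
    then have i': "i < length ls" by (simp add: fdel_length ls'_def)
    have all: "\<And>j. j \<le> i \<Longrightarrow> ls'!j = X t \<omega> j" using nth' i' by simp
    have sucf: "ls' ! Suc i = X t \<omega> (Suc i)" using nth' i' by simp
    have ex: "(\<exists>j\<le>i. ls'!j = fst p \<or> ls'!j = snd p) = (\<exists>j\<le>i. X t \<omega> j = fst (c \<omega> t) \<or> X t \<omega> j = snd (c \<omega> t))"
      using all unfolding p_def by auto
    have len': "length ls' = Suc (length ls)" by (simp add: ls'_def)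
    have "fdel p ls' ! i = (if \<exists>j\<le>i. ls'!j = fst p \<or> ls'!j = snd p then ls'!Suc i else ls'!i)"
      using fdel_nth[of i ls' p] i' len' by simp
    also have "\<dots> = (if \<exists>j\<le>i. X t \<omega> j = fst (c \<omega> t) \<or> X t \<omega> j = snd (c \<omega> t) then X t \<omega> (Suc i) else X t \<omega> i)"
      using ex all sucf by auto
    also have "\<dots> = X (Suc t) \<omega> i" using X_Suc[OF G] by simp
    finally have "fdel p ls' ! i = X (Suc t) \<omega> i" .
    then show "fdel p ls' ! i = ls ! i" using w i' unfolding Cyl_def by auto
  qed
  moreover have "\<omega> \<in> Cyl t ls' (Suc T) (pcons p ps)"
    using w G nth' unfolding Cyl_def pcons_def p_def
    by (auto split: nat.splits simp: ls'_def simp del: upt_Suc)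
  ultimately show "\<omega> \<in> (\<Union>(ls',p)\<in>{(ls',p)\<in>lists_of {..<n} (Suc (length ls)) \<times> ({..<n} \<times> {..<n}). fdel p ls' = ls}.
      Cyl t ls' (Suc T) (pcons p ps))" by blast
next
  fix \<omega> assume "\<omega> \<in> (\<Union>(ls',p)\<in>{(ls',p)\<in>lists_of {..<n} (Suc (length ls)) \<times> ({..<n} \<times> {..<n}). fdel p ls' = ls}.
      Cyl t ls' (Suc T) (pcons p ps))"
  then obtain ls' p where lp: "ls' \<in> lists_of {..<n} (Suc (length ls))" "fdel p ls' = ls"
    and w: "\<omega> \<in> Cyl t ls' (Suc T) (pcons p ps)" by auto
  have G: "\<omega> \<in> Good" using w unfolding Cyl_def by auto
  have len: "length ls' = Suc (length ls)" using lp unfolding lists_of_def by auto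
  have nth': "\<And>j. j < Suc (length ls) \<Longrightarrow> X t \<omega> j = ls' ! j" using w len unfolding Cyl_def by auto
  have "c \<omega> (t + 0) = pcons p ps 0" using w unfolding Cyl_def by blast
  then have p: "c \<omega> t = p" by (simp add: pcons_def)
  have "X (Suc t) \<omega> i = ls ! i" if i: "i < length ls" for i
  proof -
    have all: "\<And>j. j \<le> i \<Longrightarrow> X t \<omega> j = ls'!j" using nth' i by simp
    have sucf: "X t \<omega> (Suc i) = ls' ! Suc i" using nth' i by simp
    have ex: "(\<exists>j\<le>i. ls'!j = fst p \<or> ls'!j = snd p) = (\<exists>j\<le>i. X t \<omega> j = fst (c \<omega> t) \<or> X t \<omega> j = snd (c \<omega> t))"
      using all p by auto
    have "fdel p ls' ! i = (if \<exists>j\<le>i. ls'!j = fst p \<or> ls'!j = snd p then ls'!Suc i else ls'!i)"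
      using fdel_nth[of i ls' p] i len by simp
    also have "\<dots> = (if \<exists>j\<le>i. X t \<omega> j = fst (c \<omega> t) \<or> X t \<omega> j = snd (c \<omega> t) then X t \<omega> (Suc i) else X t \<omega> i)"
      using ex all sucf by auto
    also have "\<dots> = X (Suc t) \<omega> i" using X_Suc[OF G] by simp
    finally have "fdel p ls' ! i = X (Suc t) \<omega> i" .
    then show ?thesis using lp(2) by simp
  qed
  moreover have "\<forall>s<T. c \<omega> (Suc t + s) = ps s"
  proof (intro allI impI)
    fix s assume "s < T"
    then have "c \<omega> (t + Suc s) = pcons p ps (Suc s)" using w unfolding Cyl_def by auto
    then show "c \<omega> (Suc t + s) = ps s" unfolding pcons_def by simp
  qed
  ultimately show "\<omega> \<in> Cyl (Suc t) ls T ps" using G unfolding Cyl_def by auto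
qed

lemma Cyl_disj:
  assumes "\<omega> \<in> Cyl t ls1 T1 (pcons p1 ps1)" "\<omega> \<in> Cyl t ls2 T1 (pcons p2 ps2)"
    "length ls1 = length ls2" "T1 > 0"
  shows "ls1 = ls2 \<and> p1 = p2"
proof
  show "ls1 = ls2" using assms unfolding Cyl_def by (auto intro!: nth_equalityI)
  have "c \<omega> (t + 0) = pcons p1 ps1 0" "c \<omega> (t + 0) = pcons p2 ps2 0"
    using assms unfolding Cyl_def by blast+
  then show "p1 = p2" by (simp add: pcons_def)
qed

lemma sum_identity_full:
  "(\<Sum>(ls',p)\<in>{(ls',p)\<in>lists_of {..<n} (Suc (length ls)) \<times> ({..<n} \<times> {..<n}). fdel p ls' = ls}. init_prob n ls')
    = real n ^ 2 * init_prob n ls"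
proof -
  let ?I = "{(ls',p)\<in>lists_of {..<n} (Suc (length ls)) \<times> ({..<n} \<times> {..<n}). fdel p ls' = ls}"
  have "(\<Sum>(ls',p)\<in>?I. init_prob n ls')
     = (\<Sum>x\<in>lists_of {..<n} (Suc (length ls)) \<times> ({..<n} \<times> {..<n}). if fdel (snd x) (fst x) = ls then init_prob n (fst x) else 0)"
  proof -
    have "?I = {x \<in> lists_of {..<n} (Suc (length ls)) \<times> ({..<n} \<times> {..<n}). fdel (snd x) (fst x) = ls}"
      by auto
    then show ?thesis by (simp add: sum.inter_filter case_prod_beta)
  qed
  also have "\<dots> = (\<Sum>ls'\<in>lists_of {..<n} (Suc (length ls)). \<Sum>p\<in>{..<n} \<times> {..<n}. if fdel p ls' = ls then init_prob n ls' else 0)"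
    by (simp add: sum.cartesian_product case_prod_beta)
  also have "\<dots> = (\<Sum>p\<in>{..<n} \<times> {..<n}. \<Sum>ls'\<in>lists_of {..<n} (Suc (length ls)). if fdel p ls' = ls then init_prob n ls' else 0)"
    by (rule sum.swap)
  also have "\<dots> = real n ^ 2 * init_prob n ls"
  proof (cases "set ls \<subseteq> {..<n}")
    case True then show ?thesis using stationary_identity[OF True npos] by simp
  next
    case False
    have "fdel p ls' \<noteq> ls" if "ls' \<in> lists_of {..<n} (Suc (length ls))" for p ls'
      using fdel_set[of p ls'] that False unfolding lists_of_def by auto
    then have "(\<Sum>p\<in>{..<n} \<times> {..<n}. \<Sum>ls'\<in>lists_of {..<n} (Suc (length ls)). if fdel p ls' = ls then init_prob n ls' else 0) = 0"
      by (auto intro!: sum.neutral)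
    moreover have "init_prob n ls = 0" using False init_prob_aux_bad unfolding init_prob_def by auto
    ultimately show ?thesis by simp
  qed
  finally show ?thesis .
qed

lemma Cyl_main:
  "\<forall>ls T ps. (\<forall>s<T. ps s \<in> {..<n} \<times> {..<n}) \<longrightarrow>
     Cyl t ls T ps \<in> sets M \<and> measure M (Cyl t ls T ps) = init_prob n ls * (1 / (real n)^2) ^ T"
proof (induction t)
  case 0
  show ?case
  proof (intro allI impI)
    fix ls :: "nat list" and T :: nat and ps :: "nat \<Rightarrow> nat \<times> nat"
    assume ps: "\<forall>s<T. ps s \<in> {..<n} \<times> {..<n}"
    have eq: "Cyl 0 ls T ps = Good \<inter> cyl0 ls T ps"
      unfolding Cyl_def cyl0_def X_0 Good_def by auto
    have s: "Cyl 0 ls T ps \<in> sets M" unfolding eq by auto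
    have "measure M (Cyl 0 ls T ps) = measure M (cyl0 ls T ps)"
      by (rule finite_measure_eq_AE) (use AE_Good s eq in auto)
    then show "Cyl 0 ls T ps \<in> sets M \<and> measure M (Cyl 0 ls T ps) = init_prob n ls * (1 / (real n)^2) ^ T"
      using s cyl0_measure[OF ps] by simp
  qed
next
  case (Suc t)
  show ?case
  proof (intro allI impI)
    fix ls :: "nat list" and T :: nat and ps :: "nat \<Rightarrow> nat \<times> nat"
    assume ps: "\<forall>s<T. ps s \<in> {..<n} \<times> {..<n}"
    let ?I = "{(ls',p)\<in>lists_of {..<n} (Suc (length ls)) \<times> ({..<n} \<times> {..<n}). fdel p ls' = ls}"
    have finI: "finite ?I"
      by (rule finite_subset[of _ "lists_of {..<n} (Suc (length ls)) \<times> ({..<n} \<times> {..<n})"]) auto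
    have ps': "\<forall>s<Suc T. pcons p ps s \<in> {..<n} \<times> {..<n}" if "p \<in> {..<n} \<times> {..<n}" for p
      using ps that unfolding pcons_def by (auto split: nat.splits)
    have mem: "Cyl t ls' (Suc T) (pcons p ps) \<in> sets M \<and>
        measure M (Cyl t ls' (Suc T) (pcons p ps)) = init_prob n ls' * (1 / (real n)^2) ^ Suc T"
      if "(ls',p) \<in> ?I" for ls' p
      using Suc.IH ps'[of p] that by auto
    have sets: "Cyl (Suc t) ls T ps \<in> sets M"
      unfolding Cyl_decomp using mem finI by (auto intro!: sets.finite_UN)
    have "measure M (Cyl (Suc t) ls T ps) = measure M (\<Union>x\<in>?I. (\<lambda>(ls',p). Cyl t ls' (Suc T) (pcons p ps)) x)"
      unfolding Cyl_decomp by simp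
    also have "\<dots> = (\<Sum>x\<in>?I. measure M ((\<lambda>(ls',p). Cyl t ls' (Suc T) (pcons p ps)) x))"
    proof (rule measure_finite_Union[OF finI])
      show "(\<lambda>(ls', p). Cyl t ls' (Suc T) (pcons p ps)) ` ?I \<subseteq> sets M" using mem by auto
      show "disjoint_family_on (\<lambda>(ls', p). Cyl t ls' (Suc T) (pcons p ps)) ?I"
        unfolding disjoint_family_on_def
      proof (intro ballI impI)
        fix x y assume x: "x \<in> ?I" and y: "y \<in> ?I" and ne: "x \<noteq> y"
        obtain ls1 p1 where xe: "x = (ls1,p1)" by (cases x)
        obtain ls2 p2 where ye: "y = (ls2,p2)" by (cases y)
        have l: "length ls1 = length ls2" using x y xe ye by (auto simp: lists_of_def)
        show "(\<lambda>(ls', p). Cyl t ls' (Suc T) (pcons p ps)) x \<inter> (\<lambda>(ls', p). Cyl t ls' (Suc T) (pcons p ps)) y = {}"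
          using Cyl_disj[OF _ _ l, of _ t "Suc T" p1 ps p2 ps] ne xe ye by auto
      qed
      show "\<And>i. i \<in> ?I \<Longrightarrow> emeasure M ((\<lambda>(ls', p). Cyl t ls' (Suc T) (pcons p ps)) i) \<noteq> \<infinity>" by auto
    qed
    also have "\<dots> = (\<Sum>(ls',p)\<in>?I. init_prob n ls' * (1 / (real n)^2) ^ Suc T)"
      using mem by (intro sum.cong) auto
    also have "\<dots> = (1 / (real n)^2) ^ Suc T * (\<Sum>(ls',p)\<in>?I. init_prob n ls')"
      by (simp add: sum_distrib_left case_prod_beta mult.commute)
    also have "\<dots> = init_prob n ls * (1 / (real n)^2) ^ T"
      unfolding sum_identity_full using npos by (simp add: field_simps)
    finally show "Cyl (Suc t) ls T ps \<in> sets M \<and> measure M (Cyl (Suc t) ls T ps) = init_prob n ls * (1 / (real n)^2) ^ T"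
      using sets by simp
  qed
qed

end

lemma meas_any: "f \<in> measurable M (count_space UNIV) \<Longrightarrow> (\<lambda>x. h (f x)) \<in> measurable M (count_space UNIV)"
  by (rule measurable_compose[of f M "count_space UNIV"]) auto

lemma meas2:
  fixes f :: "'a \<Rightarrow> 'b::countable"
  assumes f: "f \<in> measurable M (count_space UNIV)" and g: "g \<in> measurable M (count_space UNIV)"
  shows "(\<lambda>x. h (f x) (g x)) \<in> measurable M (count_space UNIV)"
  by (rule measurable_compose_countable[where f = "\<lambda>i x. h i (g x)" and g = f, OF meas_any[OF g] f])

context mq
begin

lemma meas_present: "(\<lambda>\<omega>. k \<in> present (L \<omega>) (c \<omega>) t) \<in> measurable M (count_space UNIV)"
  and meas_del: "(\<lambda>\<omega>. deleted (L \<omega>) (c \<omega>) t) \<in> measurable M (count_space UNIV)"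
proof -
  have top: "(\<lambda>\<omega>. top_pos (L \<omega>) (present (L \<omega>) (c \<omega>) t) q) \<in> measurable M (count_space UNIV)"
    if P: "\<And>k. (\<lambda>\<omega>. k \<in> present (L \<omega>) (c \<omega>) t) \<in> measurable M (count_space UNIV)" for t q
    unfolding top_pos_def
  proof (rule measurable_Least)
    fix k
    show "(\<lambda>\<omega>. k \<in> present (L \<omega>) (c \<omega>) t \<and> L \<omega> k = q) \<in> measurable M (count_space UNIV)"
      by (rule meas2[OF P measL])
  qed
  have del: "(\<lambda>\<omega>. deleted (L \<omega>) (c \<omega>) t) \<in> measurable M (count_space UNIV)"
    if P: "\<And>k. (\<lambda>\<omega>. k \<in> present (L \<omega>) (c \<omega>) t) \<in> measurable M (count_space UNIV)" for t
    unfolding deleted_def del_pos_def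
  proof (rule measurable_compose_countable[where g = "\<lambda>\<omega>. c \<omega> t" and
        f = "\<lambda>pq \<omega>. min (top_pos (L \<omega>) (present (L \<omega>) (c \<omega>) t) (fst pq)) (top_pos (L \<omega>) (present (L \<omega>) (c \<omega>) t) (snd pq))"])
    fix pq :: "nat \<times> nat"
    show "(\<lambda>\<omega>. min (top_pos (L \<omega>) (present (L \<omega>) (c \<omega>) t) (fst pq)) (top_pos (L \<omega>) (present (L \<omega>) (c \<omega>) t) (snd pq)))
        \<in> measurable M (count_space UNIV)"
      by (rule meas2[OF top[OF P] top[OF P]])
  qed (rule measc)
  have P: "\<And>k. (\<lambda>\<omega>. k \<in> present (L \<omega>) (c \<omega>) t) \<in> measurable M (count_space UNIV)"
  proof (induction t)
    case 0 then show ?case by simp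
  next
    case (Suc t)
    have "(\<lambda>\<omega>. k \<in> present (L \<omega>) (c \<omega>) (Suc t)) = (\<lambda>\<omega>. k \<in> present (L \<omega>) (c \<omega>) t \<and> k \<noteq> deleted (L \<omega>) (c \<omega>) t)"
      by (auto simp: deleted_def)
    then show ?case using meas2[OF Suc.IH del[OF Suc.IH]] by simp
  qed
  show "(\<lambda>\<omega>. k \<in> present (L \<omega>) (c \<omega>) t) \<in> measurable M (count_space UNIV)" by (rule P)
  show "(\<lambda>\<omega>. deleted (L \<omega>) (c \<omega>) t) \<in> measurable M (count_space UNIV)" by (rule del[OF P])
qed

lemma meas_card: "(\<lambda>\<omega>. card {k \<in> present (L \<omega>) (c \<omega>) t. k < d}) \<in> measurable M (count_space UNIV)"
proof (induction d)
  case 0 then show ?case by simp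
next
  case (Suc d)
  have eq: "(\<lambda>\<omega>. card {k \<in> present (L \<omega>) (c \<omega>) t. k < Suc d})
      = (\<lambda>\<omega>. card {k \<in> present (L \<omega>) (c \<omega>) t. k < d} + (if d \<in> present (L \<omega>) (c \<omega>) t then 1 else 0))"
  proof
    fix \<omega>
    let ?P = "present (L \<omega>) (c \<omega>) t"
    define A where "A = {k \<in> ?P. k < d}"
    have fin: "finite A" unfolding A_def by (rule finite_subset[of _ "{..<d}"]) auto
    have nd: "d \<notin> A" unfolding A_def by auto
    have e: "{k \<in> ?P. k < Suc d} = (if d \<in> ?P then insert d A else A)"
      unfolding A_def by (auto simp: less_Suc_eq)
    show "card {k \<in> ?P. k < Suc d} = card {k \<in> ?P. k < d} + (if d \<in> ?P then 1 else 0)"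
      unfolding e A_def[symmetric] using card_insert_disjoint[OF fin nd] by simp
  qed
  show ?case unfolding eq
    by (rule meas2[OF Suc.IH meas_present[of d t], of "\<lambda>a b. a + (if b then 1 else 0)"])
qed

lemma meas_rank: "(\<lambda>\<omega>. rank_error (L \<omega>) (c \<omega>) t) \<in> measurable M (count_space UNIV)"
  unfolding rank_error_def
  by (rule measurable_compose_countable[where g = "\<lambda>\<omega>. deleted (L \<omega>) (c \<omega>) t" and
        f = "\<lambda>d \<omega>. card {k \<in> present (L \<omega>) (c \<omega>) t. k < d}", OF meas_card meas_del])

lemma event_sets: "{\<omega> \<in> space M. \<forall>t::nat. Q t (rank_error (L \<omega>) (c \<omega>) t)} \<in> sets M"
proof -
  have "Measurable.pred M (\<lambda>\<omega>. \<forall>t. Q t (rank_error (L \<omega>) (c \<omega>) t))"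
  proof (rule pred_intros_countable)
    fix t
    show "Measurable.pred M (\<lambda>\<omega>. Q t (rank_error (L \<omega>) (c \<omega>) t))"
      by (rule meas_any[OF meas_rank])
  qed
  then show ?thesis by (simp add: pred_def)
qed

end

lemma numeric:
  fixes a :: real and n K :: nat
  assumes a: "a > 0" and n: "n \<ge> 2" and K: "real (Suc K) \<ge> (4*a+4) * real n * ln (real n)"
  shows "(real n powr a + 1) * (real n * (1 - 1 / (2 * real n)) ^ Suc K) \<le> real n powr (- a)"
proof -
  define u where "u = 1 / (2 * real n)"
  have n0: "real n > 0" using n by simp
  have n1: "real n \<ge> 2" using n by simp
  have u0: "0 \<le> 1 - u" unfolding u_def using n1 by (simp add: field_simps)
  have "(1 - u) ^ Suc K \<le> exp (- u) ^ Suc K"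
    by (rule power_mono) (use exp_ge_add_one_self[of "-u"] u0 in auto)
  also have "\<dots> = exp (real (Suc K) * (- u))" by (rule exp_of_nat_mult[symmetric])
  also have "\<dots> \<le> exp (- (2*a+2) * ln (real n))"
  proof -
    have "(4*a+4) * real n * ln (real n) * u \<le> real (Suc K) * u"
      using K u0 unfolding u_def by (intro mult_right_mono) (auto simp: field_simps)
    moreover have "(4*a+4) * real n * ln (real n) * u = (2*a+2) * ln (real n)"
      unfolding u_def using n0 by (simp add: field_simps)
    ultimately have "(2*a+2) * ln (real n) \<le> real (Suc K) * u" by linarith
    then have "real (Suc K) * (- u) \<le> - (2*a+2) * ln (real n)" by (simp add: algebra_simps)
    then show ?thesis by simp
  qed
  also have "\<dots> = real n powr (- (2*a+2))" using n0 by (simp add: powr_def)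
  finally have b: "(1 - u) ^ Suc K \<le> real n powr (- (2*a+2))" .
  define y where "y = real n powr a"
  have y1: "y \<ge> 1" unfolding y_def using n1 a by (simp add: ge_one_powr_ge_zero)
  have e: "real n powr (- (2*a+2)) = 1 / (y * y * (real n * real n))"
  proof -
    have "real n powr (2*a+2) = real n powr (a + a + 2)" by (simp add: algebra_simps)
    also have "\<dots> = real n powr a * real n powr a * real n powr 2" by (simp only: powr_add)
    also have "real n powr 2 = real n * real n" using n0 by (simp add: powr_numeral power2_eq_square)
    finally have "real n powr (2*a+2) = y * y * (real n * real n)" unfolding y_def .
    then have h: "inverse (real n powr (2*a+2)) = 1 / (y * y * (real n * real n))"
      by (simp add: inverse_eq_divide)
    have "real n powr (- (2*a+2)) = inverse (real n powr (2*a+2))" by (rule powr_minus)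
    then show ?thesis using h by simp
  qed
  have "(y + 1) * (real n * (1 - u) ^ Suc K) \<le> (y + 1) * (real n * (1 / (y * y * (real n * real n))))"
    using b e y1 n0 by (intro mult_left_mono) auto
  also have "\<dots> = (y + 1) / (y * real n) * (1 / y)" using y1 n0 by (simp add: field_simps)
  also have "\<dots> \<le> 1 * (1 / y)"
  proof (intro mult_right_mono)
    have "y * 2 \<le> y * real n" using n1 y1 by (intro mult_left_mono) auto
    then have "y + 1 \<le> y * real n" using y1 by linarith
    then show "(y + 1) / (y * real n) \<le> 1" using y1 n0 by (simp add: field_simps)
  qed (use y1 in auto)
  also have "\<dots> = real n powr (- a)" unfolding y_def by (simp add: powr_minus divide_inverse)
  finally show ?thesis unfolding u_def y_def .
qed


context mq
begin

definition ps0 :: "nat \<Rightarrow> nat \<times> nat" where "ps0 = (\<lambda>_. (0,0))"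

definition LSbad :: "nat \<Rightarrow> nat list set" where
  "LSbad K = {ls \<in> lists_of {..<n} (Suc K). \<not> {..<n} \<subseteq> set ls}"

definition Bad :: "nat \<Rightarrow> nat \<Rightarrow> 'a set" where
  "Bad K t = (\<Union>ls\<in>LSbad K. Cyl t ls 0 ps0)"

lemma Bad_sets: "Bad K t \<in> sets M"
proof -
  have "finite (LSbad K)" unfolding LSbad_def by simp
  then show ?thesis unfolding Bad_def using Cyl_main[of t] by (auto intro!: sets.finite_UN)
qed

lemma Bad_measure: "measure M (Bad K t) \<le> real n * (1 - 1 / (2 * real n)) ^ Suc K"
proof -
  have fin: "finite (LSbad K)" unfolding LSbad_def by simp
  have "measure M (Bad K t) \<le> (\<Sum>ls\<in>LSbad K. measure M (Cyl t ls 0 ps0))"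
    unfolding Bad_def using fin Cyl_main[of t] by (intro finite_measure_subadditive_finite) auto
  also have "\<dots> = (\<Sum>ls\<in>LSbad K. init_prob n ls)"
    using Cyl_main[of t] by (intro sum.cong) auto
  also have "\<dots> = (\<Sum>ls\<in>lists_of {..<n} (Suc K). if \<not> {..<n} \<subseteq> set ls then init_prob n ls else 0)"
    unfolding LSbad_def by (simp add: sum.inter_filter)
  also have "\<dots> \<le> (\<Sum>ls\<in>lists_of {..<n} (Suc K). \<Sum>q<n. if q \<notin> set ls then init_prob n ls else 0)"
  proof (intro sum_mono)
    fix ls assume "ls \<in> lists_of {..<n} (Suc K)"
    have nn: "init_prob n ls \<ge> 0" unfolding init_prob_def by (rule init_prob_aux_nonneg) simp
    show "(if \<not> {..<n} \<subseteq> set ls then init_prob n ls else 0) \<le> (\<Sum>q<n. if q \<notin> set ls then init_prob n ls else 0)"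
    proof (cases "{..<n} \<subseteq> set ls")
      case True then show ?thesis using nn by (simp add: sum_nonneg)
    next
      case False
      then obtain q where q: "q < n" "q \<notin> set ls" by auto
      have "(if q \<notin> set ls then init_prob n ls else 0) \<le> (\<Sum>q<n. if q \<notin> set ls then init_prob n ls else 0)"
        by (rule member_le_sum) (use q nn in auto)
      then show ?thesis using False q by simp
    qed
  qed
  also have "\<dots> = (\<Sum>q<n. \<Sum>ls\<in>lists_of {..<n} (Suc K). if (\<forall>i<Suc K. True \<longrightarrow> ls!i \<noteq> q) then init_prob_aux n {} ls else 0)"
    unfolding init_prob_def
  proof (subst sum.swap, intro sum.cong refl)
    fix q ls assume "ls \<in> lists_of {..<n} (Suc K)"
    then have "length ls = Suc K" by (simp add: lists_of_def)
    then have "(q \<notin> set ls) = (\<forall>i<Suc K. True \<longrightarrow> ls!i \<noteq> q)" by (auto simp: in_set_conv_nth)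
    then show "(if q \<notin> set ls then init_prob_aux n {} ls else 0) = (if (\<forall>i<Suc K. True \<longrightarrow> ls!i \<noteq> q) then init_prob_aux n {} ls else 0)"
      by simp
  qed
  also have "\<dots> \<le> (\<Sum>q<n. (1 - 1 / (2 * real n)) ^ card {i. i < Suc K \<and> True})"
    by (intro sum_mono avoid_bound) (use npos in auto)
  also have "\<dots> = real n * (1 - 1 / (2 * real n)) ^ Suc K" by simp
  finally show ?thesis .
qed

lemma rank_in_Bad:
  assumes G: "\<omega> \<in> Good" and r: "\<not> rank_error (L \<omega>) (c \<omega>) t \<le> K"
  shows "\<omega> \<in> Bad K t"
proof -
  interpret d: det n "L \<omega>" "c \<omega>" by (rule det_Good[OF G])
  define ls where "ls = map (X t \<omega>) [0..<Suc K]"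
  have "ls \<in> lists_of {..<n} (Suc K)" unfolding ls_def lists_of_def using X_lt[OF G] by auto
  moreover have "\<not> {..<n} \<subseteq> set ls"
  proof
    assume sub: "{..<n} \<subseteq> set ls"
    have "fst (c \<omega> t) < n" using G unfolding Good_def by (auto simp: mem_Times_iff)
    then have "fst (c \<omega> t) \<in> set ls" using sub by auto
    then obtain j where j: "j < Suc K" "X t \<omega> j = fst (c \<omega> t)"
      unfolding ls_def by (auto simp del: upt_Suc)
    then have "\<exists>j\<le>K. d.hit t j" unfolding d.hit_def d.XX_def X_def[symmetric]
      by (intro exI[of _ j]) (simp add: less_Suc_eq_le)
    then have "rank_error (L \<omega>) (c \<omega>) t \<le> K" by (rule d.rank_le)
    then show False using r by simp
  qed
  moreover have "\<omega> \<in> Cyl t ls 0 ps0" unfolding Cyl_def ls_def using G by (simp del: upt_Suc)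
  ultimately show ?thesis unfolding Bad_def LSbad_def by blast
qed

lemma final:
  assumes a: "a > 0" and n2: "n \<ge> 2"
  shows "measure M {\<omega> \<in> space M. \<forall>t::nat. real t < real n powr a \<longrightarrow>
              real (rank_error (L \<omega>) (c \<omega>) t) \<le> (4*a+4) * real n * ln (real n)} \<ge> 1 - real n powr (- a)"
proof -
  define B where "B = (4*a+4) * real n * ln (real n)"
  have B0: "B \<ge> 0" unfolding B_def using a n2 by simp
  define K where "K = nat \<lfloor>B\<rfloor>"
  have KB: "real K \<le> B" unfolding K_def using B0 by linarith
  have KB': "real (Suc K) \<ge> B" unfolding K_def using B0 by linarith
  define y where "y = real n powr a"
  define Ts where "Ts = {..< nat \<lceil>y\<rceil>}"
  have Ts: "t \<in> Ts" if "real t < y" for t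
  proof -
    have "int t < \<lceil>y\<rceil>" using that by (simp add: less_ceiling_iff)
    then show ?thesis unfolding Ts_def by simp
  qed
  have cTs: "real (card Ts) \<le> y + 1"
  proof -
    have "y \<ge> 0" unfolding y_def by simp
    then show ?thesis unfolding Ts_def by simp
  qed
  define E where "E = {\<omega> \<in> space M. \<forall>t::nat. real t < real n powr a \<longrightarrow> real (rank_error (L \<omega>) (c \<omega>) t) \<le> B}"
  have Es: "E \<in> sets M" unfolding E_def by (rule event_sets)
  define U where "U = (\<Union>t\<in>Ts. Bad K t)"
  have Us: "U \<in> sets M" unfolding U_def Ts_def using Bad_sets by auto
  have sub: "Good - U \<subseteq> E"
  proof
    fix \<omega> assume w: "\<omega> \<in> Good - U"
    have "real (rank_error (L \<omega>) (c \<omega>) t) \<le> B" if t: "real t < real n powr a" for t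
    proof -
      have "\<omega> \<notin> Bad K t" using w Ts[of t] t unfolding U_def y_def by auto
      then have "rank_error (L \<omega>) (c \<omega>) t \<le> K" using rank_in_Bad w by blast
      then show ?thesis using KB by linarith
    qed
    then show "\<omega> \<in> E" using w unfolding E_def Good_def by auto
  qed
  have "measure M U \<le> (\<Sum>t\<in>Ts. measure M (Bad K t))"
    unfolding U_def Ts_def using Bad_sets by (intro finite_measure_subadditive_finite) auto
  also have "\<dots> \<le> (\<Sum>t\<in>Ts. real n * (1 - 1 / (2 * real n)) ^ Suc K)"
    by (intro sum_mono Bad_measure)
  also have "\<dots> = real (card Ts) * (real n * (1 - 1 / (2 * real n)) ^ Suc K)" by simp
  also have "\<dots> \<le> (y + 1) * (real n * (1 - 1 / (2 * real n)) ^ Suc K)"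
  proof (rule mult_right_mono[OF cTs])
    have "0 \<le> 1 - 1 / (2 * real n)" using n2 by (simp add: field_simps)
    then show "0 \<le> real n * (1 - 1 / (2 * real n)) ^ Suc K" by simp
  qed
  also have "\<dots> \<le> real n powr (- a)"
    unfolding y_def by (rule numeric[OF a n2]) (use KB' B_def in simp)
  finally have mU: "measure M U \<le> real n powr (- a)" .
  have "measure M Good \<le> measure M ((Good - U) \<union> U)"
    by (rule finite_measure_mono) (use Us in auto)
  also have "\<dots> = measure M (Good - U) + measure M U"
    by (rule finite_measure_Union) (use Us in auto)
  also have "measure M (Good - U) \<le> measure M E"
    by (rule finite_measure_mono[OF sub Es])
  finally have "1 \<le> measure M E + measure M U" using prob_Good by simp
  then show ?thesis using mU unfolding E_def B_def by simp
qed

end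

theorem theorem9:
  "\<forall>a::real. a > 0 \<longrightarrow>
     (\<exists>C::real. C > 0 \<and> (\<exists>N::nat. \<forall>n\<ge>N.
        \<forall>(M::'a measure) L c. mq_long_run M n L c \<longrightarrow>
          measure M {\<omega> \<in> space M. \<forall>t::nat. real t < real n powr a \<longrightarrow>
              real (rank_error (L \<omega>) (c \<omega>) t) \<le> C * real n * ln (real n)}
            \<ge> 1 - real n powr (- a)))"
proof (intro allI impI)
  fix a :: real assume a: "a > 0"
  show "\<exists>C::real. C > 0 \<and> (\<exists>N::nat. \<forall>n\<ge>N.
        \<forall>(M::'a measure) L c. mq_long_run M n L c \<longrightarrow>
          measure M {\<omega> \<in> space M. \<forall>t::nat. real t < real n powr a \<longrightarrow>
              real (rank_error (L \<omega>) (c \<omega>) t) \<le> C * real n * ln (real n)}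
            \<ge> 1 - real n powr (- a))"
  proof (intro exI[of _ "4*a+4"] conjI exI[of _ "2::nat"] allI impI)
    show "4 * a + 4 > 0" using a by simp
    fix n :: nat and M :: "'a measure" and L c
    assume n: "2 \<le> n" and m: "mq_long_run M n L c"
    interpret mq M n L c by unfold_locales (use m n in auto)
    show "measure M {\<omega> \<in> space M. \<forall>t::nat. real t < real n powr a \<longrightarrow>
              real (rank_error (L \<omega>) (c \<omega>) t) \<le> (4*a+4) * real n * ln (real n)}
            \<ge> 1 - real n powr (- a)"
      by (rule final[OF a n])
  qed
qed

end
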